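(* Let $Par^{bal}(k)$ denote the subspace of the partition algebra $Par(n,k)$ spanned by the balanced set partitions. Then: (1) $Par^{bal}(k)$ is a subalgebra of $Par(n,k)$; (2) for any $n,m$, the identification of these subspaces of $Par(n,k)$ and $Par(m,k)$ via the common basis of balanced set partitions is an isomorphism of algebras; (3) the action of $Par(n,k)$ on $V^{\otimes k}$ restricts to a $T\rtimes S_n$-equivariant action of $Par^{bal}(k)$, and the resulting algebra homomorphism $Par^{bal}(k)\to\mathrm{End}_{T\rtimes S_n}(V^{\otimes k})$ is surjective for all $n$ and $k$, and is an isomorphism whenever $n\ge k$.
   Context: $V=\mathbb{C}^n$ is the defining representation of $GL_n(\mathbb{C})$ with standard basis $x_1,\dots,x_n$, restricted to $T\rtimes S_n$, where $T$ is the diagonal torus and $S_n$ the permutation matrices. The partition algebra $Par(n,k)$ has basis the set partitions $d$ of $\{1,\dots,k\}\cup\{1',\dots,k'\}$; the product $d_1d_2$ is obtained by stacking the diagrams (identifying the primed vertices of one with the unprimed vertices of the other), taking the induced set partition of the outer vertices, and multiplying by $n^{c}$ where $c$ is the number of connected components lying entirely in the middle row. $Par(n,k)$ acts $S_n$-equivariantly on $V^{\otimes k}$ by letting $d$ send $x_{j_1}\otimes\dots\otimes x_{j_k}$ to $\sum x_{i_1}\otimes\dots\otimes x_{i_k}$, summed over all $(i_1,\dots,i_k)$ such that for any two vertices in the same block of $d$ the corresponding indices (with $i_r$ attached to vertex $r$ and $j_r$ to vertex $r'$) are equal. A set partition of $\{1,\dots,k\}\cup\{1',\dots,k'\}$ is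 balanced if each block $B$ satisfies $|B\cap\{1,\dots,k\}|=|B\cap\{1',\dots,k'\}|$. *)

theory Defs
  imports Complex_Main "HOL-Library.Disjoint_Sets" "HOL-Combinatorics.Permutations"
begin

text \<open>Vertices: Inl r is the unprimed vertex r (top row), Inr r the primed vertex r'
  (bottom row); indices r range over {0..<k} (0-based).\<close>
type_synonym vert = "nat + nat"
type_synonym diag = "vert set set"

definition verts :: "nat \<Rightarrow> vert set" where
  "verts k = Inl ` {..<k} \<union> Inr ` {..<k}"

definition diagrams :: "nat \<Rightarrow> diag set" where
  "diagrams k = {d. partition_on (verts k) d}"

definition balanced :: "diag \<Rightarrow> bool" where
  "balanced d \<longleftrightarrow> (\<forall>B\<in>d. card {r. Inl r \<in> B} = card {r. Inr r \<in> B})"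

definition id_diag :: "nat \<Rightarrow> diag" where
  "id_diag k = (\<lambda>r. {Inl r, Inr r}) ` {..<k}"

text \<open>Three rows of vertices (row, index): d1 occupies rows 0 (unprimed) and 1 (primed),
  d2 occupies rows 1 (unprimed) and 2 (primed); row 1 is the middle row.\<close>

definition top_emb :: "vert \<Rightarrow> nat \<times> nat" where
  "top_emb v = (case v of Inl r \<Rightarrow> (0, r) | Inr r \<Rightarrow> (1, r))"

definition bot_emb :: "vert \<Rightarrow> nat \<times> nat" where
  "bot_emb v = (case v of Inl r \<Rightarrow> (1, r) | Inr r \<Rightarrow> (2, r))"

definition stack_rel :: "diag \<Rightarrow> diag \<Rightarrow> ((nat \<times> nat) \<times> (nat \<times> nat)) set" where
  "stack_rel d1 d2 = (\<Union>B\<in>d1. top_emb ` B \<times> top_emb ` B) \<union> (\<Union>B\<in>d2. bot_emb ` B \<times> bot_emb ` B)"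

definition stack_components :: "nat \<Rightarrow> diag \<Rightarrow> diag \<Rightarrow> (nat \<times> nat) set set" where
  "stack_components k d1 d2 = ({0, 1, 2} \<times> {..<k}) // ((stack_rel d1 d2)\<^sup>*)"

definition outer_part :: "(nat \<times> nat) set \<Rightarrow> vert set" where
  "outer_part C = {Inl r | r. (0, r) \<in> C} \<union> {Inr r | r. (2, r) \<in> C}"

definition diag_comp :: "nat \<Rightarrow> diag \<Rightarrow> diag \<Rightarrow> diag" where
  "diag_comp k d1 d2 = outer_part ` stack_components k d1 d2 - {{}}"

definition middle_count :: "nat \<Rightarrow> diag \<Rightarrow> diag \<Rightarrow> nat" where
  "middle_count k d1 d2 = card {C \<in> stack_components k d1 d2. C \<subseteq> {1} \<times> UNIV}"

type_synonym palg = "diag \<Rightarrow> complex"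

definition in_Par :: "nat \<Rightarrow> palg \<Rightarrow> bool" where
  "in_Par k a \<longleftrightarrow> (\<forall>d. d \<notin> diagrams k \<longrightarrow> a d = 0)"

definition in_Par_bal :: "nat \<Rightarrow> palg \<Rightarrow> bool" where
  "in_Par_bal k a \<longleftrightarrow> (\<forall>d. \<not> (d \<in> diagrams k \<and> balanced d) \<longrightarrow> a d = 0)"

definition par_mult :: "nat \<Rightarrow> nat \<Rightarrow> palg \<Rightarrow> palg \<Rightarrow> palg" where
  "par_mult n k a b = (\<lambda>d. \<Sum>(d1, d2) \<in> {(d1, d2). d1 \<in> diagrams k \<and> d2 \<in> diagrams k \<and> diag_comp k d1 d2 = d}.
       a d1 * b d2 * (of_nat n) ^ middle_count k d1 d2)"

definition par_one :: "nat \<Rightarrow> palg" where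
  "par_one k = (\<lambda>d. if d = id_diag k then 1 else 0)"

text \<open>Basis tensors x_{i_1} \<otimes> ... \<otimes> x_{i_k} are indexed by extensional tuples
  i : {..<k} \<rightarrow> {..<n}; tensors are their coefficient functions.\<close>
definition tuples :: "nat \<Rightarrow> nat \<Rightarrow> (nat \<Rightarrow> nat) set" where
  "tuples n k = Pi\<^sub>E {..<k} (\<lambda>_. {..<n})"

definition Tens :: "nat \<Rightarrow> nat \<Rightarrow> ((nat \<Rightarrow> nat) \<Rightarrow> complex) set" where
  "Tens n k = {v. \<forall>i. i \<notin> tuples n k \<longrightarrow> v i = 0}"

definition tadd :: "((nat \<Rightarrow> nat) \<Rightarrow> complex) \<Rightarrow> ((nat \<Rightarrow> nat) \<Rightarrow> complex) \<Rightarrow> ((nat \<Rightarrow> nat) \<Rightarrow> complex)" where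
  "tadd v w = (\<lambda>i. v i + w i)"

definition tscale :: "complex \<Rightarrow> ((nat \<Rightarrow> nat) \<Rightarrow> complex) \<Rightarrow> ((nat \<Rightarrow> nat) \<Rightarrow> complex)" where
  "tscale c v = (\<lambda>i. c * v i)"

definition idx :: "(nat \<Rightarrow> nat) \<Rightarrow> (nat \<Rightarrow> nat) \<Rightarrow> vert \<Rightarrow> nat" where
  "idx i j v = (case v of Inl r \<Rightarrow> i r | Inr r \<Rightarrow> j r)"

definition diag_entry :: "diag \<Rightarrow> (nat \<Rightarrow> nat) \<Rightarrow> (nat \<Rightarrow> nat) \<Rightarrow> complex" where
  "diag_entry d i j = (if \<forall>B\<in>d. \<forall>u\<in>B. \<forall>w\<in>B. idx i j u = idx i j w then 1 else 0)"

definition diag_act :: "nat \<Rightarrow> nat \<Rightarrow> diag \<Rightarrow> ((nat \<Rightarrow> nat) \<Rightarrow> complex) \<Rightarrow> ((nat \<Rightarrow> nat) \<Rightarrow> complex)" where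
  "diag_act n k d v = (\<lambda>i. if i \<in> tuples n k then (\<Sum>j\<in>tuples n k. diag_entry d i j * v j) else 0)"

definition par_act :: "nat \<Rightarrow> nat \<Rightarrow> palg \<Rightarrow> ((nat \<Rightarrow> nat) \<Rightarrow> complex) \<Rightarrow> ((nat \<Rightarrow> nat) \<Rightarrow> complex)" where
  "par_act n k a v = (\<lambda>i. \<Sum>d\<in>diagrams k. a d * diag_act n k d v i)"

text \<open>Every element of T \<rtimes> S_n is diag(t) * P_sigma with t_x \<noteq> 0 and sigma a permutation of
  {..<n}; it sends x_j to t (sigma j) x_(sigma j).\<close>
definition torus :: "nat \<Rightarrow> (nat \<Rightarrow> complex) set" where
  "torus n = {t. \<forall>x<n. t x \<noteq> 0}"

definition grp_act :: "nat \<Rightarrow> nat \<Rightarrow> (nat \<Rightarrow> complex) \<Rightarrow> (nat \<Rightarrow> nat) \<Rightarrow> ((nat \<Rightarrow> nat) \<Rightarrow> complex) \<Rightarrow> ((nat \<Rightarrow> nat) \<Rightarrow> complex)" where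
  "grp_act n k t \<sigma> v = (\<lambda>i. if i \<in> tuples n k
      then (\<Prod>r<k. t (i r)) * v (restrict (\<lambda>r. inv \<sigma> (i r)) {..<k}) else 0)"

definition equiv_endo :: "nat \<Rightarrow> nat \<Rightarrow> (((nat \<Rightarrow> nat) \<Rightarrow> complex) \<Rightarrow> ((nat \<Rightarrow> nat) \<Rightarrow> complex)) \<Rightarrow> bool" where
  "equiv_endo n k f \<longleftrightarrow>
     (\<forall>v\<in>Tens n k. f v \<in> Tens n k) \<and>
     (\<forall>v\<in>Tens n k. \<forall>w\<in>Tens n k. f (tadd v w) = tadd (f v) (f w)) \<and>
     (\<forall>c. \<forall>v\<in>Tens n k. f (tscale c v) = tscale c (f v)) \<and>
     (\<forall>t\<in>torus n. \<forall>\<sigma>. \<sigma> permutes {..<n} \<longrightarrow>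
        (\<forall>v\<in>Tens n k. f (grp_act n k t \<sigma> v) = grp_act n k t \<sigma> (f v)))"

end

theory Submission
  imports Defs
begin


definition prel :: "diag \<Rightarrow> (vert \<times> vert) set" where
  "prel d = {(x, y). \<exists>p\<in>d. x \<in> p \<and> y \<in> p}"

definition kerv :: "nat \<Rightarrow> (nat \<Rightarrow> nat) \<Rightarrow> (nat \<Rightarrow> nat) \<Rightarrow> (vert \<times> vert) set" where
  "kerv k i j = {(u, w). u \<in> verts k \<and> w \<in> verts k \<and> idx i j u = idx i j w}"

lemma finite_verts[simp]: "finite (verts k)"
  by (simp add: verts_def)

lemma finite_diagrams[simp]: "finite (diagrams k)"
  unfolding diagrams_def by (rule finitely_many_partition_on[OF finite_verts])

lemma finite_tuples[simp]: "finite (tuples n k)"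
  by (simp add: tuples_def finite_PiE)

lemma Inl_verts[simp]: "Inl r \<in> verts k \<longleftrightarrow> r < k"
  by (auto simp: verts_def)

lemma Inr_verts[simp]: "Inr r \<in> verts k \<longleftrightarrow> r < k"
  by (auto simp: verts_def)

lemma diag_part: "d \<in> diagrams k \<Longrightarrow> partition_on (verts k) d"
  by (simp add: diagrams_def)

lemma diag_sub: "d \<in> diagrams k \<Longrightarrow> B \<in> d \<Longrightarrow> B \<subseteq> verts k"
  using partition_onD1[OF diag_part[of d k]] by blast

lemma diag_ne: "d \<in> diagrams k \<Longrightarrow> B \<in> d \<Longrightarrow> B \<noteq> {}"
  using partition_onD3[OF diag_part[of d k]] by blast

lemma diag_finite: "d \<in> diagrams k \<Longrightarrow> finite d"
  using finite_elements[OF finite_verts diag_part[of d k]] by blast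

lemma diag_block_finite: "d \<in> diagrams k \<Longrightarrow> B \<in> d \<Longrightarrow> finite B"
  by (rule finite_subset[OF diag_sub finite_verts])

lemma diag_cover: "d \<in> diagrams k \<Longrightarrow> u \<in> verts k \<Longrightarrow> \<exists>B\<in>d. u \<in> B"
  using partition_onD1[OF diag_part[of d k]] by blast

lemma diag_unique: "d \<in> diagrams k \<Longrightarrow> B \<in> d \<Longrightarrow> B' \<in> d \<Longrightarrow> u \<in> B \<Longrightarrow> u \<in> B' \<Longrightarrow> B = B'"
  using partition_onD2[OF diag_part[of d k]] unfolding disjoint_def by blast

lemma entry_iff: "diag_entry d i j = (if \<forall>B\<in>d. \<forall>u\<in>B. \<forall>w\<in>B. idx i j u = idx i j w then 1 else 0)"
  by (simp add: diag_entry_def)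

lemma entry_prel:
  assumes d: "d \<in> diagrams k"
  shows "diag_entry d i j = (if prel d \<subseteq> kerv k i j then 1 else 0)"
proof -
  have "(\<forall>B\<in>d. \<forall>u\<in>B. \<forall>w\<in>B. idx i j u = idx i j w) \<longleftrightarrow> prel d \<subseteq> kerv k i j"
  proof
    assume H: "\<forall>B\<in>d. \<forall>u\<in>B. \<forall>w\<in>B. idx i j u = idx i j w"
    show "prel d \<subseteq> kerv k i j"
    proof
      fix x assume "x \<in> prel d"
      then obtain u w B where "x = (u, w)" "B \<in> d" "u \<in> B" "w \<in> B" unfolding prel_def by blast
      then show "x \<in> kerv k i j" using H diag_sub[OF d \<open>B \<in> d\<close>] unfolding kerv_def by blast
    qed
  next
    assume H: "prel d \<subseteq> kerv k i j"
    show "\<forall>B\<in>d. \<forall>u\<in>B. \<forall>w\<in>B. idx i j u = idx i j w"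
    proof (intro ballI)
      fix B u w assume "B \<in> d" "u \<in> B" "w \<in> B"
      then have "(u, w) \<in> prel d" unfolding prel_def by blast
      then show "idx i j u = idx i j w" using H unfolding kerv_def by blast
    qed
  qed
  then show ?thesis unfolding diag_entry_def by simp
qed

lemma Inl_set_finite[simp]: "d \<in> diagrams k \<Longrightarrow> B \<in> d \<Longrightarrow> finite {r. Inl r \<in> B}"
  by (rule finite_subset[of _ "{..<k}"]) (use diag_sub[of d k B] in auto)

lemma Inr_set_finite[simp]: "d \<in> diagrams k \<Longrightarrow> B \<in> d \<Longrightarrow> finite {r. Inr r \<in> B}"
  by (rule finite_subset[of _ "{..<k}"]) (use diag_sub[of d k B] in auto)

lemma bal_union:
  assumes d: "d \<in> diagrams k" and bal: "balanced d"
    and cl: "\<forall>B\<in>d. B \<subseteq> X \<or> B \<inter> X = {}"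
  shows "card {r. Inl r \<in> X \<inter> verts k} = card {r. Inr r \<in> X \<inter> verts k}"
proof -
  define S where "S = {B\<in>d. B \<subseteq> X}"
  have fS: "finite S" using diag_finite[OF d] by (simp add: S_def)
  have eqL: "{r. Inl r \<in> X \<inter> verts k} = (\<Union>B\<in>S. {r. Inl r \<in> B})"
  proof
    show "{r. Inl r \<in> X \<inter> verts k} \<subseteq> (\<Union>B\<in>S. {r. Inl r \<in> B})"
    proof
      fix r assume "r \<in> {r. Inl r \<in> X \<inter> verts k}"
      then have "Inl r \<in> X" "Inl r \<in> verts k" by auto
      then obtain B where "B \<in> d" "Inl r \<in> B" using diag_cover[OF d] by blast
      with cl \<open>Inl r \<in> X\<close> have "B \<in> S" unfolding S_def by blast
      with \<open>Inl r \<in> B\<close> show "r \<in> (\<Union>B\<in>S. {r. Inl r \<in> B})" by blast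
    qed
    show "(\<Union>B\<in>S. {r. Inl r \<in> B}) \<subseteq> {r. Inl r \<in> X \<inter> verts k}"
      using diag_sub[OF d] unfolding S_def by blast
  qed
  have eqR: "{r. Inr r \<in> X \<inter> verts k} = (\<Union>B\<in>S. {r. Inr r \<in> B})"
  proof
    show "{r. Inr r \<in> X \<inter> verts k} \<subseteq> (\<Union>B\<in>S. {r. Inr r \<in> B})"
    proof
      fix r assume "r \<in> {r. Inr r \<in> X \<inter> verts k}"
      then have "Inr r \<in> X" "Inr r \<in> verts k" by auto
      then obtain B where "B \<in> d" "Inr r \<in> B" using diag_cover[OF d] by blast
      with cl \<open>Inr r \<in> X\<close> have "B \<in> S" unfolding S_def by blast
      with \<open>Inr r \<in> B\<close> show "r \<in> (\<Union>B\<in>S. {r. Inr r \<in> B})" by blast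
    qed
    show "(\<Union>B\<in>S. {r. Inr r \<in> B}) \<subseteq> {r. Inr r \<in> X \<inter> verts k}"
      using diag_sub[OF d] unfolding S_def by blast
  qed
  have "card (\<Union>B\<in>S. {r. Inl r \<in> B}) = (\<Sum>B\<in>S. card {r. Inl r \<in> B})"
    by (rule card_UN_disjoint[OF fS]) (use d diag_unique[OF d] in \<open>auto simp: S_def\<close>)
  also have "\<dots> = (\<Sum>B\<in>S. card {r. Inr r \<in> B})"
    using bal unfolding balanced_def S_def by auto
  also have "\<dots> = card (\<Union>B\<in>S. {r. Inr r \<in> B})"
    by (rule card_UN_disjoint[symmetric, OF fS]) (use d diag_unique[OF d] in \<open>auto simp: S_def\<close>)
  finally show ?thesis using eqL eqR by simp
qed

definition Lf :: "(nat \<Rightarrow> nat) \<Rightarrow> (nat \<Rightarrow> nat) \<Rightarrow> (nat \<Rightarrow> nat) \<Rightarrow> nat \<times> nat \<Rightarrow> nat" where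
  "Lf i j l x = (if fst x = 0 then i (snd x) else if fst x = 1 then j (snd x) else l (snd x))"

definition Lo :: "(nat \<Rightarrow> nat) \<Rightarrow> (nat \<Rightarrow> nat) \<Rightarrow> nat \<times> nat \<Rightarrow> nat" where
  "Lo i l x = (if fst x = 0 then i (snd x) else l (snd x))"

lemma Lf_outer: "fst x \<noteq> 1 \<Longrightarrow> Lf i j l x = Lo i l x"
  by (simp add: Lf_def Lo_def)

lemma idx_top: "idx i j u = Lf i j l (top_emb u)"
  by (cases u) (simp_all add: idx_def Lf_def top_emb_def)

lemma idx_bot: "idx j l u = Lf i j l (bot_emb u)"
  by (cases u) (simp_all add: idx_def Lf_def bot_emb_def)

definition opt :: "vert \<Rightarrow> nat \<times> nat" where
  "opt u = (case u of Inl r \<Rightarrow> (0, r) | Inr r \<Rightarrow> (2, r))"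

lemma idx_opt: "idx i l u = Lo i l (opt u)"
  by (cases u) (simp_all add: idx_def Lo_def opt_def)

lemma opt_fst: "fst (opt u) \<noteq> 1"
  by (cases u) (simp_all add: opt_def)

lemma outer_part_opt: "u \<in> outer_part C \<longleftrightarrow> opt u \<in> C"
  by (cases u) (auto simp: outer_part_def opt_def)

lemma tuples_ext: "i \<in> tuples n k \<Longrightarrow> r \<notin> {..<k} \<Longrightarrow> i r = undefined"
  unfolding tuples_def by (simp add: PiE_def extensional_def)

lemma tuples_val: "i \<in> tuples n k \<Longrightarrow> r < k \<Longrightarrow> i r < n"
  unfolding tuples_def by auto

lemma tuples_eqI: "i \<in> tuples n k \<Longrightarrow> j \<in> tuples n k \<Longrightarrow> (\<And>r. r < k \<Longrightarrow> i r = j r) \<Longrightarrow> i = j"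
  unfolding tuples_def by (rule PiE_ext) auto

lemma tuples_restrict: "(\<And>r. r < k \<Longrightarrow> f r < n) \<Longrightarrow> restrict f {..<k} \<in> tuples n k"
  unfolding tuples_def by auto

locale stack =
  fixes k :: nat and d1 d2 :: diag
  assumes d1: "d1 \<in> diagrams k" and d2: "d2 \<in> diagrams k"
begin

abbreviation "R \<equiv> stack_rel d1 d2"
abbreviation "G \<equiv> {0::nat, 1, 2} \<times> {..<k}"
abbreviation "comps \<equiv> stack_components k d1 d2"

lemma top_emb_G: "u \<in> verts k \<Longrightarrow> top_emb u \<in> G"
  by (auto simp: verts_def top_emb_def)

lemma bot_emb_G: "u \<in> verts k \<Longrightarrow> bot_emb u \<in> G"
  by (auto simp: verts_def bot_emb_def)

lemma R_sub: "(x, y) \<in> R \<Longrightarrow> x \<in> G \<and> y \<in> G"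
proof -
  assume "(x, y) \<in> R"
  then consider (a) B where "B \<in> d1" "x \<in> top_emb ` B" "y \<in> top_emb ` B"
    | (b) B where "B \<in> d2" "x \<in> bot_emb ` B" "y \<in> bot_emb ` B"
    unfolding stack_rel_def by blast
  then show ?thesis
  proof cases
    case a then show ?thesis using diag_sub[OF d1 a(1)] top_emb_G by blast
  next
    case b then show ?thesis using diag_sub[OF d2 b(1)] bot_emb_G by blast
  qed
qed

lemma R_sym: "(x, y) \<in> R \<Longrightarrow> (y, x) \<in> R"
  unfolding stack_rel_def by blast

lemma sym_R: "sym R"
  using R_sym unfolding sym_def by blast

lemma rt_sym: "(x, y) \<in> R\<^sup>* \<Longrightarrow> (y, x) \<in> R\<^sup>*"
  using sym_R sym_rtrancl unfolding sym_def by blast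

lemma rt_G: "(x, y) \<in> R\<^sup>* \<Longrightarrow> x \<in> G \<Longrightarrow> y \<in> G"
  by (induction rule: rtrancl_induct) (use R_sub in blast)+

lemma comps_def': "comps = G // (R\<^sup>*)"
  by (simp add: stack_components_def)

lemma comp_obtain:
  assumes "C \<in> comps"
  obtains x where "x \<in> G" "C = R\<^sup>* `` {x}"
  using assms unfolding comps_def' quotient_def by blast

lemma comp_sub: "C \<in> comps \<Longrightarrow> C \<subseteq> G"
  by (metis comp_obtain Image_singleton_iff rt_G subsetI)

lemma comp_mem_iff:
  assumes "C \<in> comps" "x \<in> C"
  shows "y \<in> C \<longleftrightarrow> (x, y) \<in> R\<^sup>*"
proof -
  obtain x0 where "x0 \<in> G" "C = R\<^sup>* `` {x0}" using comp_obtain[OF assms(1)] .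
  then show ?thesis using assms(2) rt_sym
    by (metis Image_singleton_iff rtrancl_trans)
qed

lemma comp_self: "x \<in> G \<Longrightarrow> R\<^sup>* `` {x} \<in> comps"
  unfolding comps_def' by (rule quotientI)

lemma partition_comps: "partition_on G comps"
proof (rule partition_onI)
  show "\<Union> comps = G"
  proof
    show "\<Union> comps \<subseteq> G" using comp_sub by blast
    show "G \<subseteq> \<Union> comps"
    proof
      fix x assume "x \<in> G"
      then have "x \<in> R\<^sup>* `` {x}" by blast
      with comp_self[OF \<open>x \<in> G\<close>] show "x \<in> \<Union> comps" by blast
    qed
  qed
  show "disjnt p q" if "p \<in> comps" "q \<in> comps" "p \<noteq> q" for p q
  proof (rule ccontr)
    assume "\<not> disjnt p q"
    then obtain z where z: "z \<in> p" "z \<in> q" unfolding disjnt_def by blast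
    have "y \<in> p \<longleftrightarrow> y \<in> q" for y
      using comp_mem_iff[OF that(1) z(1)] comp_mem_iff[OF that(2) z(2)] by simp
    then show False using that(3) by blast
  qed
  show "{} \<notin> comps"
  proof
    assume "{} \<in> comps"
    then obtain x where "x \<in> G" "{} = R\<^sup>* `` {x}" by (rule comp_obtain)
    then show False by blast
  qed
qed

lemma outer_part_Union: "outer_part (\<Union>P) = \<Union>(outer_part ` P)"
  unfolding outer_part_def by blast

lemma outer_part_G: "outer_part G = verts k"
  unfolding outer_part_def verts_def by auto

lemma comp_in_diagrams: "diag_comp k d1 d2 \<in> diagrams k"
proof -
  have "partition_on (outer_part G) (outer_part ` comps - {{}})"
  proof (rule partition_on_transform[OF partition_comps])
    show "\<Union> (outer_part ` comps) = outer_part (\<Union> comps)"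
      by (simp add: outer_part_Union)
    show "disjnt (outer_part p) (outer_part q)" if "disjnt p q" for p q
      using that unfolding disjnt_def outer_part_def by blast
  qed
  then show ?thesis unfolding diagrams_def diag_comp_def outer_part_G by simp
qed


lemma comp_closed1:
  assumes C: "C \<in> comps"
  shows "\<forall>B\<in>d1. B \<subseteq> top_emb -` C \<or> B \<inter> top_emb -` C = {}"
proof (intro ballI)
  fix B assume B: "B \<in> d1"
  show "B \<subseteq> top_emb -` C \<or> B \<inter> top_emb -` C = {}"
  proof (cases "B \<inter> top_emb -` C = {}")
    case False
    then obtain u where u: "u \<in> B" "top_emb u \<in> C" by blast
    have "top_emb w \<in> C" if "w \<in> B" for w
    proof -
      have "(top_emb u, top_emb w) \<in> R" using B u(1) that unfolding stack_rel_def by blast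
      then show ?thesis using comp_mem_iff[OF C u(2)] by blast
    qed
    then show ?thesis by blast
  qed simp
qed

lemma comp_closed2:
  assumes C: "C \<in> comps"
  shows "\<forall>B\<in>d2. B \<subseteq> bot_emb -` C \<or> B \<inter> bot_emb -` C = {}"
proof (intro ballI)
  fix B assume B: "B \<in> d2"
  show "B \<subseteq> bot_emb -` C \<or> B \<inter> bot_emb -` C = {}"
  proof (cases "B \<inter> bot_emb -` C = {}")
    case False
    then obtain u where u: "u \<in> B" "bot_emb u \<in> C" by blast
    have "bot_emb w \<in> C" if "w \<in> B" for w
    proof -
      have "(bot_emb u, bot_emb w) \<in> R" using B u(1) that unfolding stack_rel_def by blast
      then show ?thesis using comp_mem_iff[OF C u(2)] by blast
    qed
    then show ?thesis by blast
  qed simp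
qed

lemma row_set_eq:
  assumes C: "C \<in> comps"
  shows "{r. Inl r \<in> top_emb -` C \<inter> verts k} = {r. (0, r) \<in> C}"
    "{r. Inr r \<in> top_emb -` C \<inter> verts k} = {r. (1, r) \<in> C}"
    "{r. Inl r \<in> bot_emb -` C \<inter> verts k} = {r. (1, r) \<in> C}"
    "{r. Inr r \<in> bot_emb -` C \<inter> verts k} = {r. (2, r) \<in> C}"
  using comp_sub[OF C] by (auto simp: top_emb_def bot_emb_def)

lemma count01:
  assumes b1: "balanced d1" and C: "C \<in> comps"
  shows "card {r. (0, r) \<in> C} = card {r. (1, r) \<in> C}"
  using bal_union[OF d1 b1 comp_closed1[OF C]] row_set_eq[OF C] by simp

lemma count12:
  assumes b2: "balanced d2" and C: "C \<in> comps"
  shows "card {r. (1, r) \<in> C} = card {r. (2, r) \<in> C}"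
  using bal_union[OF d2 b2 comp_closed2[OF C]] row_set_eq[OF C] by simp

lemma comp_balanced:
  assumes b1: "balanced d1" and b2: "balanced d2"
  shows "balanced (diag_comp k d1 d2)"
  unfolding balanced_def
proof
  fix B assume "B \<in> diag_comp k d1 d2"
  then obtain C where C: "C \<in> comps" "B = outer_part C" unfolding diag_comp_def by blast
  have "{r. Inl r \<in> outer_part C} = {r. (0, r) \<in> C}" "{r. Inr r \<in> outer_part C} = {r. (2, r) \<in> C}"
    unfolding outer_part_def by auto
  then show "card {r. Inl r \<in> B} = card {r. Inr r \<in> B}"
    using count01[OF b1 C(1)] count12[OF b2 C(1)] C(2) by simp
qed

lemma middle_zero:
  assumes b1: "balanced d1"
  shows "middle_count k d1 d2 = 0"
proof -
  have "{C \<in> comps. C \<subseteq> {1} \<times> UNIV} = {}"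
  proof (rule ccontr)
    assume "{C \<in> comps. C \<subseteq> {1} \<times> UNIV} \<noteq> {}"
    then obtain C where C: "C \<in> comps" "C \<subseteq> {1} \<times> UNIV" by blast
    obtain x where x: "x \<in> G" "C = R\<^sup>* `` {x}" using comp_obtain[OF C(1)] .
    then have "x \<in> C" by blast
    with C(2) obtain r where "(1, r) \<in> C" by (cases x) auto
    have fin: "finite {r. (1, r) \<in> C}"
      by (rule finite_subset[of _ "{..<k}"]) (use comp_sub[OF C(1)] in auto)
    have "{r. (1, r) \<in> C} \<noteq> {}" using \<open>(1, r) \<in> C\<close> by blast
    then have "card {r. (1, r) \<in> C} > 0" using fin by (simp add: card_gt_0_iff)
    then have "card {r. (0::nat, r) \<in> C} > 0" using count01[OF b1 C(1)] by simp
    then obtain r' where "(0, r') \<in> C" using card_gt_0_iff by fastforce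
    then show False using C(2) by auto
  qed
  then show ?thesis unfolding middle_count_def by (metis (no_types) card.empty)
qed


lemma entry_cond: "diag_entry d i j = (if (\<forall>B\<in>d. \<forall>u\<in>B. \<forall>w\<in>B. idx i j u = idx i j w) then 1 else 0)"
  by (fact diag_entry_def)

lemma prod_entries:
  "diag_entry d1 i j * diag_entry d2 j l =
     (if \<forall>x y. (x, y) \<in> R\<^sup>* \<longrightarrow> Lf i j l x = Lf i j l y then 1 else 0)"
proof -
  define P1 where "P1 \<longleftrightarrow> (\<forall>B\<in>d1. \<forall>u\<in>B. \<forall>w\<in>B. idx i j u = idx i j w)"
  define P2 where "P2 \<longleftrightarrow> (\<forall>B\<in>d2. \<forall>u\<in>B. \<forall>w\<in>B. idx j l u = idx j l w)"
  define Q where "Q \<longleftrightarrow> (\<forall>x y. (x, y) \<in> R\<^sup>* \<longrightarrow> Lf i j l x = Lf i j l y)"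
  define Q1 where "Q1 \<longleftrightarrow> (\<forall>(x, y) \<in> R. Lf i j l x = Lf i j l y)"
  have e1: "diag_entry d1 i j = (if P1 then 1 else 0)" unfolding P1_def by (rule entry_cond)
  have e2: "diag_entry d2 j l = (if P2 then 1 else 0)" unfolding P2_def by (rule entry_cond)
  have "Q1 \<longleftrightarrow> P1 \<and> P2"
    unfolding Q1_def P1_def P2_def stack_rel_def idx_top[of i j _ l] idx_bot[of j l _ i] by blast
  moreover have "Q1 \<longleftrightarrow> Q"
  proof
    assume H: "Q1"
    show "Q" unfolding Q_def
    proof (intro allI impI)
      fix x y assume "(x, y) \<in> R\<^sup>*"
      then show "Lf i j l x = Lf i j l y"
      proof (induction rule: rtrancl_induct)
        case (step y z)
        then have "Lf i j l y = Lf i j l z" using H unfolding Q1_def by blast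
        then show ?case using step.IH by simp
      qed simp
    qed
  next
    assume H: "Q"
    show "Q1" unfolding Q1_def
    proof (rule ballI)
      fix p assume "p \<in> R"
      then have "p \<in> R\<^sup>*" by (rule r_into_rtrancl)
      then show "case p of (x, y) \<Rightarrow> Lf i j l x = Lf i j l y"
        using H[unfolded Q_def, rule_format, of "fst p" "snd p"] by (simp add: case_prod_beta)
    qed
  qed
  ultimately have E: "P1 \<and> P2 \<longleftrightarrow> Q" by blast
  show ?thesis unfolding Q_def[symmetric] e1 e2 E[symmetric] by simp
qed

definition OC :: "(nat \<Rightarrow> nat) \<Rightarrow> (nat \<Rightarrow> nat) \<Rightarrow> bool" where
  "OC i l \<longleftrightarrow> (\<forall>x y. (x, y) \<in> R\<^sup>* \<longrightarrow> x \<in> G \<longrightarrow> fst x \<noteq> 1 \<longrightarrow> fst y \<noteq> 1 \<longrightarrow> Lo i l x = Lo i l y)"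

lemma comp_entry_OC: "diag_entry (diag_comp k d1 d2) i l = (if OC i l then 1 else 0)"
proof -
  have "(\<forall>B\<in>diag_comp k d1 d2. \<forall>u\<in>B. \<forall>w\<in>B. idx i l u = idx i l w) \<longleftrightarrow> OC i l"
  proof
    assume H: "\<forall>B\<in>diag_comp k d1 d2. \<forall>u\<in>B. \<forall>w\<in>B. idx i l u = idx i l w"
    show "OC i l" unfolding OC_def
    proof (intro allI impI)
      fix x y assume xy: "(x, y) \<in> R\<^sup>*" "x \<in> G" "fst x \<noteq> 1" "fst y \<noteq> 1"
      have yG: "y \<in> G" using rt_G xy by blast
      define C where "C = R\<^sup>* `` {x}"
      have C: "C \<in> comps" unfolding C_def by (rule comp_self[OF xy(2)])
      define u where "u = (if fst x = 0 then Inl (snd x) else Inr (snd x))"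
      define w where "w = (if fst y = 0 then Inl (snd y) else Inr (snd y))"
      have "fst x = 0 \<or> fst x = 2" using xy(2,3) by auto
      then have ou: "opt u = x" unfolding u_def opt_def by (cases x) auto
      have "fst y = 0 \<or> fst y = 2" using yG xy(4) by auto
      then have ow: "opt w = y" unfolding w_def opt_def by (cases y) auto
      have "u \<in> outer_part C" unfolding outer_part_opt ou C_def by blast
      moreover have "w \<in> outer_part C" unfolding outer_part_opt ow C_def using xy(1) by blast
      have "outer_part C \<noteq> {}" using \<open>u \<in> outer_part C\<close> by blast
      then have "outer_part C \<in> diag_comp k d1 d2" using C unfolding diag_comp_def by blast
      with H \<open>u \<in> outer_part C\<close> \<open>w \<in> outer_part C\<close> have "idx i l u = idx i l w" by blast
      then show "Lo i l x = Lo i l y" using idx_opt[of i l u] idx_opt[of i l w] ou ow by simp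
    qed
  next
    assume H: "OC i l"
    show "\<forall>B\<in>diag_comp k d1 d2. \<forall>u\<in>B. \<forall>w\<in>B. idx i l u = idx i l w"
    proof (intro ballI)
      fix B u w assume B: "B \<in> diag_comp k d1 d2" and uw: "u \<in> B" "w \<in> B"
      then obtain C where C: "C \<in> comps" "B = outer_part C" unfolding diag_comp_def by blast
      have "opt u \<in> C" "opt w \<in> C" using uw C(2) outer_part_opt by blast+
      then have "(opt u, opt w) \<in> R\<^sup>*" using comp_mem_iff[OF C(1)] by blast
      moreover have "opt u \<in> G" using comp_sub[OF C(1)] \<open>opt u \<in> C\<close> by blast
      ultimately have "Lo i l (opt u) = Lo i l (opt w)"
        by (rule H[unfolded OC_def, rule_format, OF _ _ opt_fst opt_fst])
      then show "idx i l u = idx i l w" by (simp add: idx_opt)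
    qed
  qed
  then show ?thesis unfolding entry_cond[of "diag_comp k d1 d2" i l] by (rule if_cong) (rule refl)+
qed

end

context stack
begin

lemma mid_conn:
  assumes b1: "balanced d1" and r: "r < k"
  shows "\<exists>r'. r' < k \<and> ((1, r), (0, r')) \<in> R"
proof -
  obtain B where B: "B \<in> d1" "Inr r \<in> B" using diag_cover[OF d1, of "Inr r"] r by auto
  have "{r. Inr r \<in> B} \<noteq> {}" using B by blast
  then have "card {r. Inr r \<in> B} > 0" using Inr_set_finite[OF d1 B(1)] by (simp add: card_gt_0_iff)
  then have "card {r. Inl r \<in> B} > 0" using b1 B(1) unfolding balanced_def by simp
  then obtain r' where r': "Inl r' \<in> B" using card_gt_0_iff by fastforce
  have "r' < k" using diag_sub[OF d1 B(1)] r' by auto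
  moreover have "(top_emb (Inr r), top_emb (Inl r')) \<in> R" using B r' unfolding stack_rel_def by blast
  ultimately show ?thesis by (auto simp: top_emb_def)
qed

lemma comp_entry:
  assumes b1: "balanced d1" and i: "i \<in> tuples n k" and l: "l \<in> tuples n k"
  shows "(\<Sum>j\<in>tuples n k. diag_entry d1 i j * diag_entry d2 j l) = diag_entry (diag_comp k d1 d2) i l"
proof -
  define P where "P j \<longleftrightarrow> (\<forall>x y. (x, y) \<in> R\<^sup>* \<longrightarrow> Lf i j l x = Lf i j l y)" for j
  have "(\<Sum>j\<in>tuples n k. diag_entry d1 i j * diag_entry d2 j l) = (\<Sum>j\<in>tuples n k. if P j then 1 else 0)"
    unfolding P_def prod_entries by simp
  also have "\<dots> = of_nat (card {j \<in> tuples n k. P j})"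
    by (simp add: sum.If_cases Int_def)
  finally have S: "(\<Sum>j\<in>tuples n k. diag_entry d1 i j * diag_entry d2 j l) = of_nat (card {j \<in> tuples n k. P j})" .
  define om where "om r = (SOME r'. r' < k \<and> ((1, r), (0, r')) \<in> R)" for r
  have om: "om r < k \<and> ((1, r), (0, om r)) \<in> R" if "r < k" for r
    unfolding om_def by (rule someI_ex) (rule mid_conn[OF b1 that])
  define ob where "ob x = (if fst x = 1 then (0::nat, om (snd x)) else x)" for x :: "nat \<times> nat"
  have ob1: "(x, ob x) \<in> R\<^sup>*" if "x \<in> G" for x
  proof (cases "fst x = 1")
    case True
    have "snd x < k" using that by auto
    then have "((1, snd x), (0, om (snd x))) \<in> R" using om by blast
    moreover have "x = (1, snd x)" using True by (cases x) auto
    ultimately have "(x, (0, om (snd x))) \<in> R" by simp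
    then show ?thesis unfolding ob_def using True by auto
  next
    case False
    then show ?thesis unfolding ob_def by simp
  qed
  have ob2: "fst (ob x) \<noteq> 1" for x unfolding ob_def by auto
  have ob3: "ob x \<in> G" if "x \<in> G" for x using ob1[OF that] rt_G that by blast
  have PO: "OC i l" if Pj: "P j" for j
    unfolding OC_def
  proof (intro allI impI)
    fix x y assume xy: "(x, y) \<in> R\<^sup>*" "x \<in> G" "fst x \<noteq> 1" "fst y \<noteq> 1"
    have "Lf i j l x = Lf i j l y" using Pj xy(1) unfolding P_def by blast
    then show "Lo i l x = Lo i l y" using Lf_outer[OF xy(3), of i j l] Lf_outer[OF xy(4), of i j l] by simp
  qed
  show ?thesis
  proof (cases "OC i l")
    case False
    then have "{j \<in> tuples n k. P j} = {}" using PO by blast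
    then show ?thesis using S False comp_entry_OC by simp
  next
    case True
    define j0 where "j0 = restrict (\<lambda>r. i (om r)) {..<k}"
    have j0T: "j0 \<in> tuples n k"
      unfolding j0_def by (rule tuples_restrict) (use om tuples_val[OF i] in blast)
    have Lj0: "Lf i j0 l x = Lo i l (ob x)" if "x \<in> G" for x
    proof (cases "fst x = 1")
      case True
      have "snd x < k" using that by auto
      then show ?thesis using True unfolding Lf_def Lo_def ob_def j0_def by simp
    next
      case False
      then show ?thesis using Lf_outer[OF False, of i j0 l] unfolding ob_def by simp
    qed
    have Pj0: "P j0" unfolding P_def
    proof (intro allI impI)
      fix x y assume xy: "(x, y) \<in> R\<^sup>*"
      show "Lf i j0 l x = Lf i j0 l y"
      proof (cases "x = y")
        case False
        then obtain z where "(x, z) \<in> R" using xy by (metis converse_rtranclE)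
        then have xG: "x \<in> G" using R_sub by blast
        then have yG: "y \<in> G" using rt_G xy by blast
        have "(ob x, x) \<in> R\<^sup>*" using ob1[OF xG] rt_sym by blast
        also have "(x, y) \<in> R\<^sup>*" by (fact xy)
        also have "(y, ob y) \<in> R\<^sup>*" using ob1[OF yG] .
        finally have "(ob x, ob y) \<in> R\<^sup>*" .
        then have "Lo i l (ob x) = Lo i l (ob y)"
          by (rule True[unfolded OC_def, rule_format, OF _ ob3[OF xG] ob2 ob2])
        then show ?thesis using Lj0 xG yG by simp
      qed simp
    qed
    have uniq: "j = j0" if "j \<in> tuples n k" "P j" for j
    proof (rule tuples_eqI[OF that(1) j0T])
      fix r assume r: "r < k"
      have "(1, r) \<in> G" using r by simp
      have rr: "((1, r), (0, om r)) \<in> R\<^sup>*" using om[OF r] by blast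
      have "Lf i j l (1, r) = Lf i j l (0, om r)"
        by (rule that(2)[unfolded P_def, rule_format, OF rr])
      moreover have "Lf i j0 l (1, r) = Lf i j0 l (0, om r)"
        by (rule Pj0[unfolded P_def, rule_format, OF rr])
      ultimately show "j r = j0 r" by (simp add: Lf_def)
    qed
    have "{j \<in> tuples n k. P j} = {j0}" using uniq j0T Pj0 by blast
    then show ?thesis using S True comp_entry_OC by simp
  qed
qed

end




lemma comp_in: "d1 \<in> diagrams k \<Longrightarrow> d2 \<in> diagrams k \<Longrightarrow> diag_comp k d1 d2 \<in> diagrams k"
  by (rule stack.comp_in_diagrams[OF stack.intro])

lemma comp_bal: "d1 \<in> diagrams k \<Longrightarrow> d2 \<in> diagrams k \<Longrightarrow> balanced d1 \<Longrightarrow> balanced d2 \<Longrightarrow>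
    balanced (diag_comp k d1 d2)"
  by (rule stack.comp_balanced[OF stack.intro])

lemma comp_mid: "d1 \<in> diagrams k \<Longrightarrow> d2 \<in> diagrams k \<Longrightarrow> balanced d1 \<Longrightarrow> middle_count k d1 d2 = 0"
  by (rule stack.middle_zero[OF stack.intro])

lemma comp_entry_sum: "d1 \<in> diagrams k \<Longrightarrow> d2 \<in> diagrams k \<Longrightarrow> balanced d1 \<Longrightarrow>
   i \<in> tuples n k \<Longrightarrow> l \<in> tuples n k \<Longrightarrow>
   (\<Sum>j\<in>tuples n k. diag_entry d1 i j * diag_entry d2 j l) = diag_entry (diag_comp k d1 d2) i l"
  by (rule stack.comp_entry[OF stack.intro])

lemma bal_D: "in_Par_bal k a \<Longrightarrow> a d \<noteq> 0 \<Longrightarrow> d \<in> diagrams k \<and> balanced d"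
  unfolding in_Par_bal_def by blast

lemma mult_bal:
  assumes a: "in_Par_bal k a" and b: "in_Par_bal k b"
  shows "in_Par_bal k (par_mult n k a b)"
  unfolding in_Par_bal_def
proof (intro allI impI)
  fix d assume nd: "\<not> (d \<in> diagrams k \<and> balanced d)"
  show "par_mult n k a b d = 0"
    unfolding par_mult_def
  proof (rule sum.neutral, intro ballI)
    fix p assume "p \<in> {(d1, d2). d1 \<in> diagrams k \<and> d2 \<in> diagrams k \<and> diag_comp k d1 d2 = d}"
    then obtain d1 d2 where p: "p = (d1, d2)" "d1 \<in> diagrams k" "d2 \<in> diagrams k" "diag_comp k d1 d2 = d"
      by blast
    show "(case p of (d1, d2) \<Rightarrow> a d1 * b d2 * of_nat n ^ middle_count k d1 d2) = 0"
    proof (cases "a d1 = 0 \<or> b d2 = 0")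
      case False
      then have "balanced d1" "balanced d2" using bal_D[OF a] bal_D[OF b] by auto
      then have "d \<in> diagrams k \<and> balanced d" using comp_in[OF p(2,3)] comp_bal[OF p(2,3)] p(4) by auto
      with nd show ?thesis by blast
    qed (auto simp: p)
  qed
qed

lemma mult_indep:
  assumes a: "in_Par_bal k a" and b: "in_Par_bal k b"
  shows "par_mult n k a b = par_mult m k a b"
  unfolding par_mult_def
proof (rule ext, rule sum.cong[OF refl])
  fix d p assume "p \<in> {(d1, d2). d1 \<in> diagrams k \<and> d2 \<in> diagrams k \<and> diag_comp k d1 d2 = d}"
  then obtain d1 d2 where p: "p = (d1, d2)" "d1 \<in> diagrams k" "d2 \<in> diagrams k"
    by blast
  show "(case p of (d1, d2) \<Rightarrow> a d1 * b d2 * of_nat n ^ middle_count k d1 d2) =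
        (case p of (d1, d2) \<Rightarrow> a d1 * b d2 * of_nat m ^ middle_count k d1 d2)"
  proof (cases "a d1 = 0 \<or> b d2 = 0")
    case False
    then have "balanced d1" using bal_D[OF a] by auto
    then show ?thesis using comp_mid[OF p(2,3)] p(1) by simp
  qed (auto simp: p)
qed

lemma id_in: "id_diag k \<in> diagrams k"
  unfolding diagrams_def id_diag_def mem_Collect_eq
proof (rule partition_onI)
  show "\<Union> ((\<lambda>r. {Inl r, Inr r}) ` {..<k}) = verts k" unfolding verts_def by auto
  show "disjnt p q" if "p \<in> (\<lambda>r. {Inl r, Inr r}) ` {..<k}" "q \<in> (\<lambda>r. {Inl r, Inr r}) ` {..<k}" "p \<noteq> q" for p q
    using that by (auto simp: disjnt_def)
  show "{} \<notin> (\<lambda>r. {Inl r, Inr r}) ` {..<k}" by auto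
qed

lemma id_bal: "balanced (id_diag k)"
  unfolding balanced_def id_diag_def
proof
  fix B assume "B \<in> (\<lambda>r. {Inl r, Inr r}) ` {..<k}"
  then obtain r where "B = {Inl r, Inr r}" by blast
  then have "{r'. Inl r' \<in> B} = {r}" "{r'. Inr r' \<in> B} = {r}" by auto
  then show "card {r. Inl r \<in> B} = card {r. Inr r \<in> B}" by simp
qed

lemma one_bal: "in_Par_bal k (par_one k)"
  unfolding in_Par_bal_def par_one_def using id_in id_bal by auto


lemma act_out: "i \<notin> tuples n k \<Longrightarrow> diag_act n k d v i = 0"
  by (simp add: diag_act_def)

lemma act_in: "i \<in> tuples n k \<Longrightarrow> diag_act n k d v i = (\<Sum>j\<in>tuples n k. diag_entry d i j * v j)"
  by (simp add: diag_act_def)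

lemma act_lin:
  assumes S: "finite S"
  shows "diag_act n k d (\<lambda>j. \<Sum>x\<in>S. c x * w x j) i = (\<Sum>x\<in>S. c x * diag_act n k d (w x) i)"
proof (cases "i \<in> tuples n k")
  case True
  have "diag_act n k d (\<lambda>j. \<Sum>x\<in>S. c x * w x j) i =
        (\<Sum>j\<in>tuples n k. \<Sum>x\<in>S. diag_entry d i j * (c x * w x j))"
    using True by (simp add: act_in sum_distrib_left)
  also have "\<dots> = (\<Sum>x\<in>S. \<Sum>j\<in>tuples n k. diag_entry d i j * (c x * w x j))"
    by (rule sum.swap)
  also have "\<dots> = (\<Sum>x\<in>S. c x * diag_act n k d (w x) i)"
    using True by (simp add: act_in sum_distrib_left mult.left_commute)
  finally show ?thesis .
qed (simp add: act_out)

lemma act_comp: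
  assumes d1: "d1 \<in> diagrams k" and d2: "d2 \<in> diagrams k" and b1: "balanced d1"
  shows "diag_act n k (diag_comp k d1 d2) v i = diag_act n k d1 (diag_act n k d2 v) i"
proof (cases "i \<in> tuples n k")
  case True
  have "diag_act n k d1 (diag_act n k d2 v) i =
      (\<Sum>j\<in>tuples n k. diag_entry d1 i j * (\<Sum>l\<in>tuples n k. diag_entry d2 j l * v l))"
    using True by (simp add: act_in)
  also have "\<dots> = (\<Sum>j\<in>tuples n k. \<Sum>l\<in>tuples n k. diag_entry d1 i j * diag_entry d2 j l * v l)"
    by (simp add: sum_distrib_left mult.assoc)
  also have "\<dots> = (\<Sum>l\<in>tuples n k. \<Sum>j\<in>tuples n k. diag_entry d1 i j * diag_entry d2 j l * v l)"
    by (rule sum.swap)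
  also have "\<dots> = (\<Sum>l\<in>tuples n k. (\<Sum>j\<in>tuples n k. diag_entry d1 i j * diag_entry d2 j l) * v l)"
    by (simp add: sum_distrib_right)
  also have "\<dots> = (\<Sum>l\<in>tuples n k. diag_entry (diag_comp k d1 d2) i l * v l)"
    using comp_entry_sum[OF d1 d2 b1 True] by simp
  also have "\<dots> = diag_act n k (diag_comp k d1 d2) v i"
    using True by (simp add: act_in)
  finally show ?thesis by simp
qed (simp add: act_out)

lemma hom:
  assumes a: "in_Par_bal k a" and b: "in_Par_bal k b"
  shows "par_act n k (par_mult n k a b) v i = par_act n k a (par_act n k b v) i"
proof -
  define cp where "cp p = diag_comp k (fst p) (snd p)" for p
  define H where "H p = a (fst p) * b (snd p) * of_nat n ^ middle_count k (fst p) (snd p) *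
     diag_act n k (cp p) v i" for p
  have fib: "{(d1, d2). d1 \<in> diagrams k \<and> d2 \<in> diagrams k \<and> diag_comp k d1 d2 = d} =
      {p. p \<in> diagrams k \<times> diagrams k \<and> cp p = d}" for d
    unfolding cp_def by auto
  have "par_act n k (par_mult n k a b) v i =
     (\<Sum>d\<in>diagrams k. \<Sum>p\<in>{p. p \<in> diagrams k \<times> diagrams k \<and> cp p = d}. H p)"
    unfolding par_act_def par_mult_def fib
  proof (rule sum.cong[OF refl])
    fix d assume "d \<in> diagrams k"
    show "(\<Sum>p\<in>{p. p \<in> diagrams k \<times> diagrams k \<and> cp p = d}.
             case p of (d1, d2) \<Rightarrow> a d1 * b d2 * of_nat n ^ middle_count k d1 d2) * diag_act n k d v i =
          (\<Sum>p\<in>{p. p \<in> diagrams k \<times> diagrams k \<and> cp p = d}. H p)"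
      unfolding sum_distrib_right H_def by (rule sum.cong[OF refl]) (auto simp: case_prod_beta)
  qed
  also have "\<dots> = (\<Sum>p\<in>diagrams k \<times> diagrams k. H p)"
    by (rule sum.group) (auto simp: cp_def intro: comp_in)
  also have "\<dots> = (\<Sum>p\<in>diagrams k \<times> diagrams k. a (fst p) * b (snd p) *
       diag_act n k (fst p) (diag_act n k (snd p) v) i)"
  proof (rule sum.cong[OF refl])
    fix p assume p: "p \<in> diagrams k \<times> diagrams k"
    show "H p = a (fst p) * b (snd p) * diag_act n k (fst p) (diag_act n k (snd p) v) i"
    proof (cases "a (fst p) = 0 \<or> b (snd p) = 0")
      case False
      then have "balanced (fst p)" using bal_D[OF a] by auto
      then show ?thesis unfolding H_def cp_def using p comp_mid act_comp by auto
    qed (auto simp: H_def)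
  qed
  also have "\<dots> = (\<Sum>d1\<in>diagrams k. \<Sum>d2\<in>diagrams k. a d1 * b d2 * diag_act n k d1 (diag_act n k d2 v) i)"
    by (simp add: sum.cartesian_product case_prod_beta)
  also have "\<dots> = (\<Sum>d1\<in>diagrams k. a d1 * (\<Sum>d2\<in>diagrams k. b d2 * diag_act n k d1 (diag_act n k d2 v) i))"
    by (simp add: sum_distrib_left mult.assoc)
  also have "\<dots> = par_act n k a (par_act n k b v) i"
    unfolding par_act_def by (simp add: act_lin)
  finally show ?thesis .
qed

lemma one_act:
  assumes v: "v \<in> Tens n k"
  shows "par_act n k (par_one k) v = v"
proof
  fix i
  have "par_act n k (par_one k) v i = diag_act n k (id_diag k) v i"
  proof -
    have "par_act n k (par_one k) v i = (\<Sum>d\<in>diagrams k. if d = id_diag k then diag_act n k d v i else 0)"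
      unfolding par_act_def par_one_def by (rule sum.cong) auto
    also have "\<dots> = diag_act n k (id_diag k) v i" using id_in[of k] by (simp add: sum.delta)
    finally show ?thesis .
  qed
  also have "\<dots> = v i"
  proof (cases "i \<in> tuples n k")
    case True
    have "diag_entry (id_diag k) i j = (if j = i then 1 else 0)" if j: "j \<in> tuples n k" for j
    proof -
      have "(\<forall>B\<in>id_diag k. \<forall>u\<in>B. \<forall>w\<in>B. idx i j u = idx i j w) \<longleftrightarrow> (\<forall>r<k. i r = j r)"
        unfolding id_diag_def by (auto simp: idx_def)
      also have "\<dots> \<longleftrightarrow> j = i" using tuples_eqI[OF True j] by auto
      finally have E: "(\<forall>B\<in>id_diag k. \<forall>u\<in>B. \<forall>w\<in>B. idx i j u = idx i j w) \<longleftrightarrow> j = i" .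
      show ?thesis unfolding diag_entry_def E by (rule refl)
    qed
    then have "diag_act n k (id_diag k) v i = (\<Sum>j\<in>tuples n k. (if j = i then 1 else 0) * v j)"
      using True by (simp add: act_in)
    also have "\<dots> = (\<Sum>j\<in>tuples n k. if j = i then v j else 0)" by (rule sum.cong) auto
    also have "\<dots> = v i" using True by simp
    finally show ?thesis .
  next
    case False
    then show ?thesis using v act_out unfolding Tens_def by auto
  qed
  finally show "par_act n k (par_one k) v i = v i" .
qed




definition rho :: "nat \<Rightarrow> (nat \<Rightarrow> nat) \<Rightarrow> (nat \<Rightarrow> nat) \<Rightarrow> nat \<Rightarrow> nat" where
  "rho k f i = restrict (\<lambda>r. f (i r)) {..<k}"

lemma rho_T:
  assumes "\<And>x. x < n \<Longrightarrow> f x < n" "i \<in> tuples n k"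
  shows "rho k f i \<in> tuples n k"
  unfolding rho_def by (rule tuples_restrict) (use assms tuples_val in blast)

lemma rho_rho:
  assumes "i \<in> tuples n k" "\<And>x. x < n \<Longrightarrow> g (f x) = x"
  shows "rho k g (rho k f i) = i"
proof (rule tuples_eqI[of _ n k])
  show "rho k g (rho k f i) \<in> tuples n k" unfolding rho_def
    by (rule tuples_restrict) (use assms tuples_val in auto)
  show "\<And>r. r < k \<Longrightarrow> rho k g (rho k f i) r = i r"
    using assms tuples_val unfolding rho_def by auto
qed (fact assms(1))

lemma perm_lt: "\<sigma> permutes {..<n} \<Longrightarrow> x < n \<Longrightarrow> \<sigma> x < n"
  using permutes_in_image[of \<sigma> "{..<n}" x] by simp

lemma perm_inv_lt: "\<sigma> permutes {..<n} \<Longrightarrow> x < n \<Longrightarrow> inv \<sigma> x < n"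
  using perm_lt[OF permutes_inv] by blast

lemma rho_bij:
  assumes s: "\<sigma> permutes {..<n}"
  shows "bij_betw (rho k (inv \<sigma>)) (tuples n k) (tuples n k)"
proof (rule bij_betw_byWitness[where f' = "rho k \<sigma>"])
  show "\<forall>a\<in>tuples n k. rho k \<sigma> (rho k (inv \<sigma>) a) = a"
    using rho_rho[of _ n k \<sigma> "inv \<sigma>"] permutes_inverses(1)[OF s] by blast
  show "\<forall>a'\<in>tuples n k. rho k (inv \<sigma>) (rho k \<sigma> a') = a'"
    using rho_rho[of _ n k "inv \<sigma>" \<sigma>] permutes_inverses(2)[OF s] by blast
  show "rho k (inv \<sigma>) ` tuples n k \<subseteq> tuples n k"
    using rho_T[of n "inv \<sigma>"] perm_inv_lt[OF s] by blast
  show "rho k \<sigma> ` tuples n k \<subseteq> tuples n k"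
    using rho_T[of n \<sigma>] perm_lt[OF s] by blast
qed

lemma idx_rho: "u \<in> verts k \<Longrightarrow> idx (rho k f i) (rho k f j) u = f (idx i j u)"
  by (cases u) (auto simp: idx_def rho_def)

lemma entry_rho:
  assumes d: "d \<in> diagrams k" and f: "inj f"
  shows "diag_entry d (rho k f i) (rho k f j) = diag_entry d i j"
proof -
  have "(\<forall>B\<in>d. \<forall>u\<in>B. \<forall>w\<in>B. idx (rho k f i) (rho k f j) u = idx (rho k f i) (rho k f j) w) \<longleftrightarrow>
        (\<forall>B\<in>d. \<forall>u\<in>B. \<forall>w\<in>B. idx i j u = idx i j w)"
  proof (intro ball_cong refl)
    fix B u w assume "B \<in> d" "u \<in> B" "w \<in> B"
    then have "u \<in> verts k" "w \<in> verts k" using diag_sub[OF d] by blast+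
    then show "idx (rho k f i) (rho k f j) u = idx (rho k f i) (rho k f j) w \<longleftrightarrow> idx i j u = idx i j w"
      using idx_rho inj_eq[OF f] by metis
  qed
  then show ?thesis unfolding diag_entry_def by (rule if_cong) (rule refl)+
qed

lemma bal_prod:
  assumes d: "d \<in> diagrams k" and bal: "balanced d"
    and H: "\<forall>B\<in>d. \<forall>u\<in>B. \<forall>w\<in>B. idx i j u = idx i j w"
  shows "(\<Prod>r<k. t (i r)) = (\<Prod>r<k. (t (j r) :: complex))"
proof -
  have fd: "finite d" by (rule diag_finite[OF d])
  have disjL: "\<forall>B\<in>d. \<forall>B'\<in>d. B \<noteq> B' \<longrightarrow> {r. Inl r \<in> B} \<inter> {r. Inl r \<in> B'} = {}"
    using diag_unique[OF d] by blast
  have disjR: "\<forall>B\<in>d. \<forall>B'\<in>d. B \<noteq> B' \<longrightarrow> {r. Inr r \<in> B} \<inter> {r. Inr r \<in> B'} = {}"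
    using diag_unique[OF d] by blast
  have UL: "{..<k} = (\<Union>B\<in>d. {r. Inl r \<in> B})"
  proof
    show "{..<k} \<subseteq> (\<Union>B\<in>d. {r. Inl r \<in> B})"
    proof
      fix r assume "r \<in> {..<k}"
      then obtain B where "B \<in> d" "Inl r \<in> B" using diag_cover[OF d, of "Inl r"] by auto
      then show "r \<in> (\<Union>B\<in>d. {r. Inl r \<in> B})" by blast
    qed
    show "(\<Union>B\<in>d. {r. Inl r \<in> B}) \<subseteq> {..<k}" using diag_sub[OF d] by fastforce
  qed
  have UR: "{..<k} = (\<Union>B\<in>d. {r. Inr r \<in> B})"
  proof
    show "{..<k} \<subseteq> (\<Union>B\<in>d. {r. Inr r \<in> B})"
    proof
      fix r assume "r \<in> {..<k}"
      then obtain B where "B \<in> d" "Inr r \<in> B" using diag_cover[OF d, of "Inr r"] by auto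
      then show "r \<in> (\<Union>B\<in>d. {r. Inr r \<in> B})" by blast
    qed
    show "(\<Union>B\<in>d. {r. Inr r \<in> B}) \<subseteq> {..<k}" using diag_sub[OF d] by fastforce
  qed
  have "(\<Prod>r<k. t (i r)) = (\<Prod>B\<in>d. \<Prod>r\<in>{r. Inl r \<in> B}. t (i r))"
    unfolding UL by (rule prod.UNION_disjoint[OF fd]) (use d disjL in auto)
  also have "\<dots> = (\<Prod>B\<in>d. \<Prod>r\<in>{r. Inr r \<in> B}. t (j r))"
  proof (rule prod.cong[OF refl])
    fix B assume B: "B \<in> d"
    obtain u0 where u0: "u0 \<in> B" using diag_ne[OF d B] by blast
    define c where "c = idx i j u0"
    have "(\<Prod>r\<in>{r. Inl r \<in> B}. t (i r)) = (\<Prod>r\<in>{r. Inl r \<in> B}. t c)"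
    proof (rule prod.cong[OF refl])
      fix r assume "r \<in> {r. Inl r \<in> B}"
      then have "idx i j (Inl r) = c" using H B u0 unfolding c_def by blast
      then show "t (i r) = t c" by (simp add: idx_def)
    qed
    also have "\<dots> = t c ^ card {r. Inl r \<in> B}" by simp
    also have "\<dots> = t c ^ card {r. Inr r \<in> B}" using bal B unfolding balanced_def by simp
    also have "\<dots> = (\<Prod>r\<in>{r. Inr r \<in> B}. t c)" by simp
    also have "\<dots> = (\<Prod>r\<in>{r. Inr r \<in> B}. t (j r))"
    proof (rule prod.cong[OF refl])
      fix r assume "r \<in> {r. Inr r \<in> B}"
      then have "idx i j (Inr r) = c" using H B u0 unfolding c_def by blast
      then show "t c = t (j r)" by (simp add: idx_def)
    qed
    finally show "(\<Prod>r\<in>{r. Inl r \<in> B}. t (i r)) = (\<Prod>r\<in>{r. Inr r \<in> B}. t (j r))" .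
  qed
  also have "\<dots> = (\<Prod>r<k. t (j r))"
    unfolding UR by (rule prod.UNION_disjoint[symmetric, OF fd]) (use d disjR in auto)
  finally show ?thesis .
qed

lemma grp_in: "i \<in> tuples n k \<Longrightarrow> grp_act n k t \<sigma> v i = (\<Prod>r<k. t (i r)) * v (rho k (inv \<sigma>) i)"
  by (simp add: grp_act_def rho_def)

lemma grp_out: "i \<notin> tuples n k \<Longrightarrow> grp_act n k t \<sigma> v i = 0"
  by (simp add: grp_act_def)

lemma diag_equiv:
  assumes d: "d \<in> diagrams k" and bal: "balanced d" and s: "\<sigma> permutes {..<n}"
  shows "diag_act n k d (grp_act n k t \<sigma> v) i = grp_act n k t \<sigma> (diag_act n k d v) i"
proof (cases "i \<in> tuples n k")
  case True
  let ?p = "rho k (inv \<sigma>)"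
  have injs: "inj (inv \<sigma>)" using permutes_inj[OF permutes_inv[OF s]] .
  have piT: "?p i \<in> tuples n k" using rho_bij[OF s] True by (auto simp: bij_betw_def)
  have "grp_act n k t \<sigma> (diag_act n k d v) i =
      (\<Prod>r<k. t (i r)) * (\<Sum>j\<in>tuples n k. diag_entry d (?p i) j * v j)"
    using True piT by (simp add: grp_in act_in)
  also have "(\<Sum>j\<in>tuples n k. diag_entry d (?p i) j * v j) =
      (\<Sum>j\<in>tuples n k. diag_entry d (?p i) (?p j) * v (?p j))"
    by (rule sum.reindex_bij_betw[symmetric, OF rho_bij[OF s]])
  also have "\<dots> = (\<Sum>j\<in>tuples n k. diag_entry d i j * v (?p j))"
    using entry_rho[OF d injs] by simp
  finally have R: "grp_act n k t \<sigma> (diag_act n k d v) i =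
      (\<Sum>j\<in>tuples n k. (\<Prod>r<k. t (i r)) * diag_entry d i j * v (?p j))"
    by (simp add: sum_distrib_left mult.assoc)
  have "diag_act n k d (grp_act n k t \<sigma> v) i =
      (\<Sum>j\<in>tuples n k. diag_entry d i j * ((\<Prod>r<k. t (j r)) * v (?p j)))"
    using True by (simp add: act_in grp_in)
  also have "\<dots> = (\<Sum>j\<in>tuples n k. (\<Prod>r<k. t (i r)) * diag_entry d i j * v (?p j))"
  proof (rule sum.cong[OF refl])
    fix j assume "j \<in> tuples n k"
    show "diag_entry d i j * ((\<Prod>r<k. t (j r)) * v (?p j)) = (\<Prod>r<k. t (i r)) * diag_entry d i j * v (?p j)"
    proof (cases "\<forall>B\<in>d. \<forall>u\<in>B. \<forall>w\<in>B. idx i j u = idx i j w")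
      case True
      then show ?thesis using bal_prod[OF d bal True, of t] by simp
    next
      case False
      then have "diag_entry d i j = 0" unfolding diag_entry_def by (rule if_not_P)
      then show ?thesis by simp
    qed
  qed
  finally show ?thesis using R by simp
qed (simp add: act_out grp_out)

lemma grp_lin:
  assumes "finite S"
  shows "grp_act n k t \<sigma> (\<lambda>x. \<Sum>d\<in>S. c d * w d x) i = (\<Sum>d\<in>S. c d * grp_act n k t \<sigma> (w d) i)"
  by (cases "i \<in> tuples n k") (simp_all add: grp_in grp_out sum_distrib_left mult.left_commute)

lemma act_add: "diag_act n k d (tadd v w) i = diag_act n k d v i + diag_act n k d w i"
  by (cases "i \<in> tuples n k") (simp_all add: act_in act_out tadd_def distrib_left sum.distrib)

lemma act_scale: "diag_act n k d (tscale c v) i = c * diag_act n k d v i"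
  by (cases "i \<in> tuples n k") (simp_all add: act_in act_out tscale_def sum_distrib_left mult.left_commute)

lemma par_equiv:
  assumes a: "in_Par_bal k a"
  shows "equiv_endo n k (par_act n k a)"
  unfolding equiv_endo_def
proof (intro conjI ballI allI impI)
  fix v :: "(nat \<Rightarrow> nat) \<Rightarrow> complex"
  show "par_act n k a v \<in> Tens n k"
    unfolding Tens_def par_act_def by (auto simp: act_out)
next
  fix v w :: "(nat \<Rightarrow> nat) \<Rightarrow> complex"
  show "par_act n k a (tadd v w) = tadd (par_act n k a v) (par_act n k a w)"
    unfolding par_act_def tadd_def[of "\<lambda>i. \<Sum>d\<in>diagrams k. a d * diag_act n k d v i"]
    by (simp add: act_add distrib_left sum.distrib)
next
  fix c v
  show "par_act n k a (tscale c v) = tscale c (par_act n k a v)"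
    unfolding par_act_def tscale_def[of c "\<lambda>i. \<Sum>d\<in>diagrams k. a d * diag_act n k d v i"]
    by (simp add: act_scale sum_distrib_left mult.left_commute)
next
  fix t \<sigma> v
  assume s: "\<sigma> permutes {..<n}"
  show "par_act n k a (grp_act n k t \<sigma> v) = grp_act n k t \<sigma> (par_act n k a v)"
  proof
    fix i
    have "par_act n k a (grp_act n k t \<sigma> v) i = (\<Sum>d\<in>diagrams k. a d * grp_act n k t \<sigma> (diag_act n k d v) i)"
      unfolding par_act_def
    proof (rule sum.cong[OF refl])
      fix d assume "d \<in> diagrams k"
      show "a d * diag_act n k d (grp_act n k t \<sigma> v) i = a d * grp_act n k t \<sigma> (diag_act n k d v) i"
      proof (cases "a d = 0")
        case False
        then have "balanced d" using bal_D[OF a] by blast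
        then show ?thesis using diag_equiv[OF \<open>d \<in> diagrams k\<close> _ s] by simp
      qed simp
    qed
    also have "\<dots> = grp_act n k t \<sigma> (par_act n k a v) i"
      unfolding par_act_def by (rule grp_lin[symmetric]) simp
    finally show "par_act n k a (grp_act n k t \<sigma> v) i = grp_act n k t \<sigma> (par_act n k a v) i" .
  qed
qed




lemma equiv_kerv: "equiv (verts k) (kerv k i j)"
  by (rule equivI) (auto simp: kerv_def refl_on_def sym_def trans_def)

definition Kp :: "nat \<Rightarrow> (nat \<Rightarrow> nat) \<Rightarrow> (nat \<Rightarrow> nat) \<Rightarrow> diag" where
  "Kp k i j = verts k // kerv k i j"

lemma Kp_in: "Kp k i j \<in> diagrams k"
  unfolding Kp_def diagrams_def using partition_on_quotient[OF equiv_kerv] by simp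

lemma prel_quotient:
  assumes e: "equiv A r"
  shows "prel (A // r) = r"
proof
  show "prel (A // r) \<subseteq> r"
  proof
    fix p assume "p \<in> prel (A // r)"
    then obtain x y X where p: "p = (x, y)" "X \<in> A // r" "x \<in> X" "y \<in> X" unfolding prel_def by blast
    then obtain a where "a \<in> A" "X = r `` {a}" by (auto elim: quotientE)
    then have "(a, x) \<in> r" "(a, y) \<in> r" using p by auto
    then show "p \<in> r" using e p(1) unfolding equiv_def sym_def trans_def by blast
  qed
  show "r \<subseteq> prel (A // r)"
  proof
    fix p assume pr: "p \<in> r"
    obtain x y where p: "p = (x, y)" by (cases p)
    have "x \<in> A" using pr p e unfolding equiv_def refl_on_def by blast
    then have "r `` {x} \<in> A // r" by (rule quotientI)
    moreover have "x \<in> r `` {x}" using \<open>x \<in> A\<close> e unfolding equiv_def refl_on_def by blast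
    moreover have "y \<in> r `` {x}" using pr p by blast
    ultimately show "p \<in> prel (A // r)" unfolding prel_def p by blast
  qed
qed

lemma prel_Kp: "prel (Kp k i j) = kerv k i j"
  unfolding Kp_def by (rule prel_quotient[OF equiv_kerv])

lemma prel_inj:
  assumes "d \<in> diagrams k" "d' \<in> diagrams k" "prel d = prel d'"
  shows "d = d'"
proof -
  have e1: "verts k // prel d = d"
    using partition_on_eq_quotient[OF diag_part[OF assms(1)]] unfolding prel_def .
  have e2: "verts k // prel d' = d'"
    using partition_on_eq_quotient[OF diag_part[OF assms(2)]] unfolding prel_def .
  show ?thesis using e1 e2 assms(3) by metis
qed

lemma prel_sub:
  assumes d: "d \<in> diagrams k"
  shows "prel d \<subseteq> verts k \<times> verts k"
proof
  fix x assume "x \<in> prel d"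
  then obtain u w p where x: "x = (u, w)" "p \<in> d" "u \<in> p" "w \<in> p" unfolding prel_def by blast
  have "p \<subseteq> verts k" by (rule diag_sub[OF d x(2)])
  then show "x \<in> verts k \<times> verts k" using x by blast
qed

lemma prel_finite: "d \<in> diagrams k \<Longrightarrow> finite (prel d)"
  by (rule finite_subset[OF prel_sub]) simp_all

lemma coarsen_bal:
  assumes p: "p \<in> diagrams k" and bp: "balanced p" and d: "d \<in> diagrams k"
    and sub: "prel p \<subseteq> prel d"
  shows "balanced d"
  unfolding balanced_def
proof
  fix B' assume B': "B' \<in> d"
  have cl: "\<forall>B\<in>p. B \<subseteq> B' \<or> B \<inter> B' = {}"
  proof
    fix B assume B: "B \<in> p"
    show "B \<subseteq> B' \<or> B \<inter> B' = {}"
    proof (cases "B \<inter> B' = {}")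
      case False
      then obtain u where u: "u \<in> B" "u \<in> B'" by blast
      have "w \<in> B'" if w: "w \<in> B" for w
      proof -
        have "(u, w) \<in> prel p" using B u w unfolding prel_def by blast
        then have "(u, w) \<in> prel d" using sub by blast
        then obtain q where q: "q \<in> d" "u \<in> q" "w \<in> q" unfolding prel_def by blast
        then have "q = B'" using diag_unique[OF d q(1) B' q(2) u(2)] by simp
        then show ?thesis using q by simp
      qed
      then show ?thesis by blast
    qed simp
  qed
  have "B' \<inter> verts k = B'" using diag_sub[OF d B'] by blast
  then show "card {r. Inl r \<in> B'} = card {r. Inr r \<in> B'}"
    using bal_union[OF p bp cl] by simp
qed

definition rep :: "nat \<Rightarrow> nat \<Rightarrow> ((nat \<Rightarrow> nat) \<Rightarrow> (nat \<Rightarrow> nat) \<Rightarrow> complex) \<Rightarrow> bool" where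
  "rep n k G \<longleftrightarrow> (\<exists>a. in_Par_bal k a \<and>
     (\<forall>i\<in>tuples n k. \<forall>j\<in>tuples n k. (\<Sum>d\<in>diagrams k. a d * diag_entry d i j) = G i j))"

lemma rep_cong:
  assumes "rep n k G" "\<And>i j. i \<in> tuples n k \<Longrightarrow> j \<in> tuples n k \<Longrightarrow> G i j = G' i j"
  shows "rep n k G'"
  using assms unfolding rep_def by metis

lemma rep_D:
  assumes "p \<in> diagrams k" "balanced p"
  shows "rep n k (diag_entry p)"
  unfolding rep_def
proof (intro exI conjI ballI)
  show "in_Par_bal k (\<lambda>d. if d = p then 1 else 0)" using assms unfolding in_Par_bal_def by auto
  fix i j
  have "(\<Sum>d\<in>diagrams k. (if d = p then 1 else 0) * diag_entry d i j) =
        (\<Sum>d\<in>diagrams k. if d = p then diag_entry d i j else 0)"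
    by (rule sum.cong) auto
  also have "\<dots> = diag_entry p i j" using assms(1) by (simp add: sum.delta')
  finally show "(\<Sum>d\<in>diagrams k. (if d = p then 1 else 0) * diag_entry d i j) = diag_entry p i j" .
qed

lemma rep_zero: "rep n k (\<lambda>i j. 0)"
  unfolding rep_def by (rule exI[of _ "\<lambda>d. 0"]) (simp add: in_Par_bal_def)

lemma rep_add:
  assumes "rep n k G" "rep n k H"
  shows "rep n k (\<lambda>i j. G i j + H i j)"
proof -
  obtain a where a: "in_Par_bal k a" "\<forall>i\<in>tuples n k. \<forall>j\<in>tuples n k. (\<Sum>d\<in>diagrams k. a d * diag_entry d i j) = G i j"
    using assms(1) unfolding rep_def by blast
  obtain b where b: "in_Par_bal k b" "\<forall>i\<in>tuples n k. \<forall>j\<in>tuples n k. (\<Sum>d\<in>diagrams k. b d * diag_entry d i j) = H i j"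
    using assms(2) unfolding rep_def by blast
  show ?thesis unfolding rep_def
  proof (intro exI conjI ballI)
    show "in_Par_bal k (\<lambda>d. a d + b d)" using a(1) b(1) unfolding in_Par_bal_def by auto
    fix i j assume "i \<in> tuples n k" "j \<in> tuples n k"
    then show "(\<Sum>d\<in>diagrams k. (a d + b d) * diag_entry d i j) = G i j + H i j"
      using a(2) b(2) by (simp add: distrib_right sum.distrib)
  qed
qed

lemma rep_scale:
  assumes "rep n k G"
  shows "rep n k (\<lambda>i j. c * G i j)"
proof -
  obtain a where a: "in_Par_bal k a" "\<forall>i\<in>tuples n k. \<forall>j\<in>tuples n k. (\<Sum>d\<in>diagrams k. a d * diag_entry d i j) = G i j"
    using assms(1) unfolding rep_def by blast
  show ?thesis unfolding rep_def
  proof (intro exI conjI ballI)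
    show "in_Par_bal k (\<lambda>d. c * a d)" using a(1) unfolding in_Par_bal_def by auto
    fix i j assume "i \<in> tuples n k" "j \<in> tuples n k"
    then have "(\<Sum>d\<in>diagrams k. a d * diag_entry d i j) = G i j" using a(2) by blast
    then show "(\<Sum>d\<in>diagrams k. (c * a d) * diag_entry d i j) = c * G i j"
      by (simp add: sum_distrib_left[symmetric] mult.assoc)
  qed
qed

lemma rep_diff:
  assumes "rep n k G" "rep n k H"
  shows "rep n k (\<lambda>i j. G i j - H i j)"
  using rep_add[OF assms(1) rep_scale[OF assms(2), of "-1"]] by simp

lemma rep_sum:
  assumes "finite S" "\<And>x. x \<in> S \<Longrightarrow> rep n k (G x)"
  shows "rep n k (\<lambda>i j. \<Sum>x\<in>S. G x i j)"
  using assms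
proof (induction S rule: finite_induct)
  case empty then show ?case by (simp add: rep_zero)
next
  case (insert x S)
  then show ?case using rep_add[of n k "G x" "\<lambda>i j. \<Sum>x\<in>S. G x i j"] by simp
qed

definition Exd :: "nat \<Rightarrow> diag \<Rightarrow> (nat \<Rightarrow> nat) \<Rightarrow> (nat \<Rightarrow> nat) \<Rightarrow> complex" where
  "Exd k p i j = (if kerv k i j = prel p then 1 else 0)"

lemma Exd_Kp: "d \<in> diagrams k \<Longrightarrow> kerv k i j = prel d \<longleftrightarrow> d = Kp k i j"
  using prel_inj[OF _ Kp_in] prel_Kp by metis

lemma D_Ex:
  assumes p: "p \<in> diagrams k"
  shows "diag_entry p i j = (\<Sum>d\<in>{d\<in>diagrams k. prel p \<subseteq> prel d}. Exd k d i j)"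
proof -
  have "(\<Sum>d\<in>{d\<in>diagrams k. prel p \<subseteq> prel d}. Exd k d i j) =
        (\<Sum>d\<in>{d\<in>diagrams k. prel p \<subseteq> prel d}. if Kp k i j = d then 1 else 0)"
    by (rule sum.cong[OF refl]) (use Exd_Kp in \<open>auto simp: Exd_def\<close>)
  also have "\<dots> = (if Kp k i j \<in> {d\<in>diagrams k. prel p \<subseteq> prel d} then 1 else 0)"
    by (rule sum.delta') simp
  also have "\<dots> = (if prel p \<subseteq> kerv k i j then 1 else 0)"
    using Kp_in prel_Kp by simp
  finally show ?thesis using entry_prel[OF p] by simp
qed

lemma rep_Ex_aux:
  "\<forall>p. p \<in> diagrams k \<longrightarrow> balanced p \<longrightarrow> card (verts k \<times> verts k) - card (prel p) = m \<longrightarrow> rep n k (Exd k p)"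
proof (induction m rule: less_induct)
  case (less m)
  show ?case
  proof (intro allI impI)
    fix p assume p: "p \<in> diagrams k" and bp: "balanced p" and m: "card (verts k \<times> verts k) - card (prel p) = m"
    define S where "S = {d\<in>diagrams k. prel p \<subset> prel d}"
    have fS: "finite S" unfolding S_def by simp
    have IH: "rep n k (Exd k d)" if d: "d \<in> S" for d
    proof -
      have dD: "d \<in> diagrams k" and sub: "prel p \<subset> prel d" using d unfolding S_def by auto
      have bd: "balanced d" using coarsen_bal[OF p bp dD] sub by blast
      have "card (prel p) < card (prel d)" using psubset_card_mono[OF prel_finite[OF dD] sub] .
      moreover have "card (prel d) \<le> card (verts k \<times> verts k)"
        using card_mono[OF _ prel_sub[OF dD]] by simp
      ultimately have "card (verts k \<times> verts k) - card (prel d) < m" using m by linarith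
      then show ?thesis using less.IH dD bd by blast
    qed
    have "rep n k (\<lambda>i j. diag_entry p i j - (\<Sum>d\<in>S. Exd k d i j))"
      by (rule rep_diff[OF rep_D[OF p bp] rep_sum[OF fS IH]])
    then show "rep n k (Exd k p)"
    proof (rule rep_cong)
      fix i j
      have PI: "\<forall>d\<in>diagrams k. prel p = prel d \<longrightarrow> d = p" using prel_inj[OF p] by blast
      have "{d\<in>diagrams k. prel p \<subseteq> prel d} = insert p S" using p PI unfolding S_def by auto
      moreover have "p \<notin> S" unfolding S_def by auto
      ultimately have "diag_entry p i j = Exd k p i j + (\<Sum>d\<in>S. Exd k d i j)"
        using D_Ex[OF p, of i j] fS by simp
      then show "diag_entry p i j - (\<Sum>d\<in>S. Exd k d i j) = Exd k p i j" by simp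
    qed
  qed
qed

lemma rep_Ex: "p \<in> diagrams k \<Longrightarrow> balanced p \<Longrightarrow> rep n k (Exd k p)"
  using rep_Ex_aux by blast




lemma perm_extend:
  assumes S: "finite S" and A: "A \<subseteq> S" and inj: "inj_on \<phi> A" and im: "\<phi> ` A \<subseteq> S"
  shows "\<exists>\<sigma>. \<sigma> permutes S \<and> (\<forall>x\<in>A. \<sigma> x = \<phi> x)"
proof -
  have fA: "finite A" using finite_subset[OF A S] .
  have "card (S - A) = card S - card A" using card_Diff_subset[OF fA A] .
  moreover have "card (S - \<phi> ` A) = card S - card (\<phi> ` A)"
    using card_Diff_subset[OF finite_imageI[OF fA] im] .
  moreover have "card (\<phi> ` A) = card A" using card_image[OF inj] .
  ultimately have "card (S - A) = card (S - \<phi> ` A)" by simp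
  then obtain \<psi> where psi: "bij_betw \<psi> (S - A) (S - \<phi> ` A)"
    using finite_same_card_bij[of "S - A" "S - \<phi> ` A"] S by blast
  define \<sigma> where "\<sigma> x = (if x \<in> A then \<phi> x else if x \<in> S then \<psi> x else x)" for x
  have b1: "bij_betw \<sigma> A (\<phi> ` A)"
    using inj_on_imp_bij_betw[OF inj] by (rule bij_betw_cong[THEN iffD1, rotated]) (simp add: \<sigma>_def)
  have b2: "bij_betw \<sigma> (S - A) (S - \<phi> ` A)"
    using psi by (rule bij_betw_cong[THEN iffD1, rotated]) (simp add: \<sigma>_def)
  have "bij_betw \<sigma> (A \<union> (S - A)) (\<phi> ` A \<union> (S - \<phi> ` A))"
    by (rule bij_betw_combine[OF b1 b2]) blast
  moreover have "A \<union> (S - A) = S" "\<phi> ` A \<union> (S - \<phi> ` A) = S" using A im by blast+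
  ultimately have "bij_betw \<sigma> S S" by simp
  moreover have "\<sigma> x = x" if "x \<notin> S" for x using that A unfolding \<sigma>_def by auto
  ultimately have "\<sigma> permutes S" by (rule bij_imp_permutes)
  moreover have "\<forall>x\<in>A. \<sigma> x = \<phi> x" unfolding \<sigma>_def by simp
  ultimately show ?thesis by blast
qed

lemma pow2_inj: "(2::complex) ^ a = 2 ^ b \<Longrightarrow> a = b"
proof -
  assume h: "(2::complex) ^ a = 2 ^ b"
  have "(of_nat (2 ^ a) :: complex) = of_nat (2 ^ b)" using h by simp
  then have "(2::nat) ^ a = 2 ^ b" by (simp only: of_nat_eq_iff)
  then show "a = b" by simp
qed

lemma prod_if2: "(\<Prod>r<(k::nat). (if (i::nat\<Rightarrow>nat) r = x then 2 else 1 :: complex)) = 2 ^ card {r. r < k \<and> i r = x}"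
proof -
  have "(\<Prod>r<k. (if i r = x then 2 else 1 :: complex)) = (\<Prod>r\<in>{r\<in>{..<k}. i r = x}. 2)"
    by (rule prod.inter_filter[symmetric]) simp
  moreover have "{r\<in>{..<k}. i r = x} = {r. r < k \<and> i r = x}" by auto
  ultimately show ?thesis by simp
qed

definition ej :: "(nat \<Rightarrow> nat) \<Rightarrow> (nat \<Rightarrow> nat) \<Rightarrow> complex" where
  "ej j = (\<lambda>i. if i = j then 1 else 0)"

lemma ej_T: "j \<in> tuples n k \<Longrightarrow> ej j \<in> Tens n k"
  unfolding ej_def Tens_def by auto

lemma rho_id: "i \<in> tuples n k \<Longrightarrow> rho k id i = i"
  by (rule tuples_eqI[of _ n k]) (auto simp: rho_def intro: tuples_restrict tuples_val)

lemma rho_id': "i \<in> tuples n k \<Longrightarrow> rho k (\<lambda>x. x) i = i"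
  using rho_id[of i n k] by (simp add: id_def)

locale endo =
  fixes n k :: nat and f :: "((nat \<Rightarrow> nat) \<Rightarrow> complex) \<Rightarrow> ((nat \<Rightarrow> nat) \<Rightarrow> complex)"
  assumes eq: "equiv_endo n k f"
begin

abbreviation "T \<equiv> tuples n k"

definition F :: "(nat \<Rightarrow> nat) \<Rightarrow> (nat \<Rightarrow> nat) \<Rightarrow> complex" where
  "F i j = f (ej j) i"

lemma f_Tens: "v \<in> Tens n k \<Longrightarrow> f v \<in> Tens n k"
  using eq unfolding equiv_endo_def by blast

lemma f_add: "v \<in> Tens n k \<Longrightarrow> w \<in> Tens n k \<Longrightarrow> f (tadd v w) = tadd (f v) (f w)"
  using eq unfolding equiv_endo_def by blast

lemma f_scale: "v \<in> Tens n k \<Longrightarrow> f (tscale c v) = tscale c (f v)"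
  using eq unfolding equiv_endo_def by blast

lemma f_grp: "t \<in> torus n \<Longrightarrow> \<sigma> permutes {..<n} \<Longrightarrow> v \<in> Tens n k \<Longrightarrow>
    f (grp_act n k t \<sigma> v) = grp_act n k t \<sigma> (f v)"
  using eq unfolding equiv_endo_def by blast

lemma F_out: "i \<notin> T \<Longrightarrow> j \<in> T \<Longrightarrow> F i j = 0"
  using f_Tens[OF ej_T] unfolding F_def Tens_def by blast

lemma f_zero: "f (\<lambda>_. 0) = (\<lambda>_. 0)"
proof -
  have z: "(\<lambda>_. 0) \<in> Tens n k" unfolding Tens_def by simp
  have "f (tscale 0 (\<lambda>_. 0)) = tscale 0 (f (\<lambda>_. 0))" by (rule f_scale[OF z])
  then show ?thesis by (simp add: tscale_def)
qed

lemma f_sum: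
  assumes "finite S" "\<And>x. x \<in> S \<Longrightarrow> w x \<in> Tens n k"
  shows "f (\<lambda>i. \<Sum>x\<in>S. c x * w x i) = (\<lambda>i. \<Sum>x\<in>S. c x * f (w x) i)"
  using assms
proof (induction S rule: finite_induct)
  case empty
  then show ?case using f_zero by simp
next
  case (insert x S)
  have wx: "w x \<in> Tens n k" using insert by simp
  have sT: "tscale (c x) (w x) \<in> Tens n k" using wx unfolding Tens_def tscale_def by simp
  have rT: "(\<lambda>i. \<Sum>y\<in>S. c y * w y i) \<in> Tens n k" using insert unfolding Tens_def by simp
  have "(\<lambda>i. \<Sum>y\<in>insert x S. c y * w y i) = tadd (tscale (c x) (w x)) (\<lambda>i. \<Sum>y\<in>S. c y * w y i)"
    using insert by (simp add: tadd_def tscale_def)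
  then have "f (\<lambda>i. \<Sum>y\<in>insert x S. c y * w y i) = tadd (f (tscale (c x) (w x))) (f (\<lambda>i. \<Sum>y\<in>S. c y * w y i))"
    using f_add[OF sT rT] by simp
  also have "\<dots> = tadd (tscale (c x) (f (w x))) (\<lambda>i. \<Sum>y\<in>S. c y * f (w y) i)"
    using f_scale[OF wx] insert by simp
  also have "\<dots> = (\<lambda>i. \<Sum>y\<in>insert x S. c y * f (w y) i)"
    using insert by (simp add: tadd_def tscale_def)
  finally show ?case .
qed

lemma f_expand:
  assumes v: "v \<in> Tens n k"
  shows "f v i = (\<Sum>j\<in>T. v j * F i j)"
proof -
  have "v = (\<lambda>i. \<Sum>j\<in>T. v j * ej j i)"
  proof
    fix i
    show "v i = (\<Sum>j\<in>T. v j * ej j i)"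
    proof (cases "i \<in> T")
      case True
      have "(\<Sum>j\<in>T. v j * ej j i) = (\<Sum>j\<in>T. if i = j then v j else 0)"
        by (rule sum.cong) (auto simp: ej_def)
      then show ?thesis using True by simp
    next
      case False
      then have "(\<Sum>j\<in>T. v j * ej j i) = 0" by (intro sum.neutral) (auto simp: ej_def)
      then show ?thesis using False v unfolding Tens_def by simp
    qed
  qed
  then have "f v = f (\<lambda>i. \<Sum>j\<in>T. v j * ej j i)" by simp
  also have "\<dots> = (\<lambda>i. \<Sum>j\<in>T. v j * f (ej j) i)" by (rule f_sum) (auto intro: ej_T)
  finally show ?thesis unfolding F_def by simp
qed

lemma F_perm:
  assumes s: "\<sigma> permutes {..<n}" and i: "i \<in> T" and j: "j \<in> T"
  shows "F (rho k \<sigma> i) (rho k \<sigma> j) = F i j"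
proof -
  define t1 where "t1 = (\<lambda>_::nat. 1::complex)"
  have t1: "t1 \<in> torus n" unfolding torus_def t1_def by simp
  have rj: "rho k \<sigma> j \<in> T" using rho_T[of n \<sigma> j k] perm_lt[OF s] j by blast
  have ri: "rho k \<sigma> i \<in> T" using rho_T[of n \<sigma> i k] perm_lt[OF s] i by blast
  have bk1: "rho k (inv \<sigma>) (rho k \<sigma> x) = x" if "x \<in> T" for x
    using rho_rho[OF that] permutes_inverses(2)[OF s] by blast
  have bk2: "rho k \<sigma> (rho k (inv \<sigma>) x) = x" if "x \<in> T" for x
    using rho_rho[OF that] permutes_inverses(1)[OF s] by blast
  have g: "grp_act n k t1 \<sigma> (ej j) = ej (rho k \<sigma> j)"
  proof
    fix x
    show "grp_act n k t1 \<sigma> (ej j) x = ej (rho k \<sigma> j) x"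
    proof (cases "x \<in> T")
      case True
      have "rho k (inv \<sigma>) x = j \<longleftrightarrow> x = rho k \<sigma> j"
        using bk1[OF j] bk2[OF True] by metis
      then show ?thesis using True by (simp add: grp_in t1_def ej_def)
    next
      case False
      then show ?thesis using rj by (auto simp: grp_out ej_def)
    qed
  qed
  have "F (rho k \<sigma> i) (rho k \<sigma> j) = f (grp_act n k t1 \<sigma> (ej j)) (rho k \<sigma> i)"
    by (simp only: F_def g)
  also have "\<dots> = grp_act n k t1 \<sigma> (f (ej j)) (rho k \<sigma> i)"
    using f_grp[OF t1 s ej_T[OF j]] by simp
  also have "\<dots> = F i j"
    using ri bk1[OF i] by (simp add: grp_in t1_def F_def)
  finally show ?thesis .
qed

lemma F_torus:
  assumes t: "t \<in> torus n" and i: "i \<in> T" and j: "j \<in> T"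
  shows "(\<Prod>r<k. t (i r)) * F i j = (\<Prod>r<k. t (j r)) * F i j"
proof -
  have s: "id permutes {..<n}" by (rule permutes_id)
  have g: "grp_act n k t id (ej j) = tscale (\<Prod>r<k. t (j r)) (ej j)"
  proof
    fix x
    show "grp_act n k t id (ej j) x = tscale (\<Prod>r<k. t (j r)) (ej j) x"
    proof (cases "x \<in> T")
      case True
      then show ?thesis using rho_id[OF True] by (auto simp: grp_in ej_def tscale_def inv_id)
    next
      case False
      then have "x \<noteq> j" using j by blast
      then show ?thesis using False by (simp add: grp_out ej_def tscale_def)
    qed
  qed
  have "(\<Prod>r<k. t (j r)) * F i j = f (grp_act n k t id (ej j)) i"
    unfolding g f_scale[OF ej_T[OF j]] by (simp add: tscale_def F_def)
  also have "\<dots> = grp_act n k t id (f (ej j)) i" using f_grp[OF t s ej_T[OF j]] by simp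
  also have "\<dots> = (\<Prod>r<k. t (i r)) * F i j"
    using i rho_id[OF i] by (simp add: grp_in F_def inv_id)
  finally show ?thesis by (rule sym)
qed


lemma idx_lt: "i \<in> T \<Longrightarrow> j \<in> T \<Longrightarrow> u \<in> verts k \<Longrightarrow> idx i j u < n"
  by (cases u) (auto simp: idx_def tuples_val)

lemma F_bal:
  assumes i: "i \<in> T" and j: "j \<in> T" and nz: "F i j \<noteq> 0"
  shows "balanced (Kp k i j)"
proof -
  have cnt: "card {r. r < k \<and> i r = x} = card {r. r < k \<and> j r = x}" for x
  proof -
    define t where "t = (\<lambda>y. if y = x then 2 else (1::complex))"
    have t: "t \<in> torus n" unfolding torus_def t_def by simp
    have "(\<Prod>r<k. t (i r)) = (\<Prod>r<k. t (j r))" using F_torus[OF t i j] nz by simp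
    then have "(2::complex) ^ card {r. r < k \<and> i r = x} = 2 ^ card {r. r < k \<and> j r = x}"
      unfolding t_def prod_if2 .
    then show ?thesis by (rule pow2_inj)
  qed
  show ?thesis unfolding balanced_def
  proof
    fix B assume "B \<in> Kp k i j"
    then obtain u where u: "u \<in> verts k" "B = kerv k i j `` {u}" unfolding Kp_def by (auto elim: quotientE)
    have "{r. Inl r \<in> B} = {r. r < k \<and> i r = idx i j u}" using u unfolding kerv_def by (auto simp: idx_def)
    moreover have "{r. Inr r \<in> B} = {r. r < k \<and> j r = idx i j u}" using u unfolding kerv_def by (auto simp: idx_def)
    ultimately show "card {r. Inl r \<in> B} = card {r. Inr r \<in> B}" using cnt by simp
  qed
qed

lemma F_inv:
  assumes i: "i \<in> T" and j: "j \<in> T" and i': "i' \<in> T" and j': "j' \<in> T"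
    and K: "kerv k i j = kerv k i' j'"
  shows "F i j = F i' j'"
proof -
  have key: "idx i j u = idx i j w \<longleftrightarrow> idx i' j' u = idx i' j' w" if "u \<in> verts k" "w \<in> verts k" for u w
  proof -
    have "(u, w) \<in> kerv k i j \<longleftrightarrow> (u, w) \<in> kerv k i' j'" using K by simp
    then show ?thesis using that unfolding kerv_def by simp
  qed
  define A where "A = idx i j ` verts k"
  define sel where "sel y = (SOME u. u \<in> verts k \<and> idx i j u = y)" for y
  define \<phi> where "\<phi> y = idx i' j' (sel y)" for y
  have phi: "\<phi> (idx i j u) = idx i' j' u" if u: "u \<in> verts k" for u
  proof -
    have s: "sel (idx i j u) \<in> verts k \<and> idx i j (sel (idx i j u)) = idx i j u"
      unfolding sel_def by (rule someI_ex) (use u in blast)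
    then show ?thesis unfolding \<phi>_def using key[OF _ u] by blast
  qed
  have inj: "inj_on \<phi> A"
  proof (rule inj_onI)
    fix y1 y2 assume "y1 \<in> A" "y2 \<in> A" "\<phi> y1 = \<phi> y2"
    then obtain u w where uw: "u \<in> verts k" "w \<in> verts k" "y1 = idx i j u" "y2 = idx i j w" "\<phi> y1 = \<phi> y2"
      unfolding A_def by blast
    then have "idx i' j' u = idx i' j' w" using phi by metis
    then show "y1 = y2" using key[OF uw(1,2)] uw(3,4) by simp
  qed
  have AS: "A \<subseteq> {..<n}" unfolding A_def using idx_lt[OF i j] by auto
  have imS: "\<phi> ` A \<subseteq> {..<n}" unfolding A_def using idx_lt[OF i' j'] phi by auto
  obtain \<sigma> where s: "\<sigma> permutes {..<n}" and sA: "\<forall>y\<in>A. \<sigma> y = \<phi> y"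
    using perm_extend[OF finite_lessThan AS inj imS] by blast
  have ri: "rho k \<sigma> i = i'"
  proof (rule tuples_eqI[of _ n k])
    show "rho k \<sigma> i \<in> T" using rho_T[of n \<sigma> i k] perm_lt[OF s] i by blast
    fix r assume r: "r < k"
    have "Inl r \<in> verts k" using r by simp
    then have "\<sigma> (idx i j (Inl r)) = idx i' j' (Inl r)" using sA phi unfolding A_def by auto
    then show "rho k \<sigma> i r = i' r" using r by (simp add: rho_def idx_def)
  qed (fact i')
  have rj: "rho k \<sigma> j = j'"
  proof (rule tuples_eqI[of _ n k])
    show "rho k \<sigma> j \<in> T" using rho_T[of n \<sigma> j k] perm_lt[OF s] j by blast
    fix r assume r: "r < k"
    have "Inr r \<in> verts k" using r by simp
    then have "\<sigma> (idx i j (Inr r)) = idx i' j' (Inr r)" using sA phi unfolding A_def by auto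
    then show "rho k \<sigma> j r = j' r" using r by (simp add: rho_def idx_def)
  qed (fact j')
  show ?thesis using F_perm[OF s i j] ri rj by simp
qed

lemma rep_F: "rep n k F"
proof -
  define Pb where "Pb = {p \<in> diagrams k. balanced p}"
  define w where "w p = (SOME q. q \<in> T \<times> T \<and> kerv k (fst q) (snd q) = prel p)" for p
  define c where "c p = F (fst (w p)) (snd (w p))" for p
  have fP: "finite Pb" unfolding Pb_def by simp
  have "rep n k (\<lambda>i j. \<Sum>p\<in>Pb. c p * Exd k p i j)"
    by (rule rep_sum[OF fP]) (rule rep_scale, rule rep_Ex, auto simp: Pb_def)
  then show ?thesis
  proof (rule rep_cong)
    fix i j assume i: "i \<in> T" and j: "j \<in> T"
    have "(\<Sum>p\<in>Pb. c p * Exd k p i j) = (\<Sum>p\<in>Pb. if Kp k i j = p then c p else 0)"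
      by (rule sum.cong[OF refl]) (use Exd_Kp in \<open>auto simp: Pb_def Exd_def\<close>)
    also have "\<dots> = (if Kp k i j \<in> Pb then c (Kp k i j) else 0)"
      by (rule sum.delta'[OF fP])
    also have "\<dots> = F i j"
    proof (cases "Kp k i j \<in> Pb")
      case True
      have ex: "\<exists>q. q \<in> T \<times> T \<and> kerv k (fst q) (snd q) = prel (Kp k i j)"
        using i j prel_Kp by (intro exI[of _ "(i, j)"]) simp
      have wq: "w (Kp k i j) \<in> T \<times> T \<and> kerv k (fst (w (Kp k i j))) (snd (w (Kp k i j))) = prel (Kp k i j)"
        unfolding w_def by (rule someI_ex[OF ex])
      then have "c (Kp k i j) = F i j"
        unfolding c_def using F_inv[OF _ _ i j] prel_Kp by (simp add: mem_Times_iff)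
      then show ?thesis using True by simp
    next
      case False
      then have "\<not> balanced (Kp k i j)" using Kp_in unfolding Pb_def by blast
      then have "F i j = 0" using F_bal[OF i j] by blast
      then show ?thesis using False by simp
    qed
    finally show "(\<Sum>p\<in>Pb. c p * Exd k p i j) = F i j" .
  qed
qed

lemma surj_main: "\<exists>a. in_Par_bal k a \<and> (\<forall>v\<in>Tens n k. par_act n k a v = f v)"
proof -
  obtain a where a: "in_Par_bal k a"
    and aF: "\<forall>i\<in>T. \<forall>j\<in>T. (\<Sum>d\<in>diagrams k. a d * diag_entry d i j) = F i j"
    using rep_F unfolding rep_def by blast
  have "par_act n k a v = f v" if v: "v \<in> Tens n k" for v
  proof
    fix i
    show "par_act n k a v i = f v i"
    proof (cases "i \<in> T")
      case True
      have "par_act n k a v i = (\<Sum>d\<in>diagrams k. \<Sum>j\<in>T. a d * diag_entry d i j * v j)"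
        unfolding par_act_def using True by (simp add: act_in sum_distrib_left mult.assoc)
      also have "\<dots> = (\<Sum>j\<in>T. (\<Sum>d\<in>diagrams k. a d * diag_entry d i j) * v j)"
        by (subst sum.swap) (simp add: sum_distrib_right)
      also have "\<dots> = (\<Sum>j\<in>T. v j * F i j)"
        using aF True by (simp add: mult.commute)
      also have "\<dots> = f v i" using f_expand[OF v] by simp
      finally show ?thesis .
    next
      case False
      then show ?thesis using f_Tens[OF v] unfolding par_act_def Tens_def by (simp add: act_out)
    qed
  qed
  then show ?thesis using a by blast
qed

end




lemma block_has_Inl:
  assumes p: "p \<in> diagrams k" and bp: "balanced p" and B: "B \<in> p"
  shows "\<exists>r<k. Inl r \<in> B"
proof (rule ccontr)
  assume "\<not> (\<exists>r<k. Inl r \<in> B)"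
  then have L: "{r. Inl r \<in> B} = {}" using diag_sub[OF p B] by auto
  have "card {r. Inr r \<in> B} = card {r. Inl r \<in> B}" using bp B unfolding balanced_def by simp
  then have "card {r. Inr r \<in> B} = 0" using L by simp
  then have R: "{r. Inr r \<in> B} = {}" using Inr_set_finite[OF p B] by simp
  have "B = {}"
  proof
    show "B \<subseteq> {}"
    proof
      fix u assume "u \<in> B"
      then show "u \<in> {}" using L R by (cases u) auto
    qed
  qed simp
  then show False using diag_ne[OF p B] by simp
qed

lemma realize:
  assumes p: "p \<in> diagrams k" and bp: "balanced p" and kn: "k \<le> n"
  shows "\<exists>i\<in>tuples n k. \<exists>j\<in>tuples n k. kerv k i j = prel p"
proof -
  define g where "g B = (SOME r. r < k \<and> Inl r \<in> B)" for B :: "vert set"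
  have g: "g B < k \<and> Inl (g B) \<in> B" if "B \<in> p" for B
    unfolding g_def by (rule someI_ex) (use block_has_Inl[OF p bp that] in blast)
  have ginj: "inj_on g p"
  proof (rule inj_onI)
    fix B B' assume BB: "B \<in> p" "B' \<in> p" "g B = g B'"
    have "Inl (g B) \<in> B" using g[OF BB(1)] by blast
    moreover have "Inl (g B) \<in> B'" using g[OF BB(2)] BB(3) by simp
    ultimately show "B = B'" by (rule diag_unique[OF p BB(1) BB(2)])
  qed
  define blk where "blk u = (SOME B. B \<in> p \<and> u \<in> B)" for u
  have blk: "blk u \<in> p \<and> u \<in> blk u" if "u \<in> verts k" for u
    unfolding blk_def by (rule someI_ex) (use diag_cover[OF p that] in blast)
  define i where "i = restrict (\<lambda>r. g (blk (Inl r))) {..<k}"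
  define j where "j = restrict (\<lambda>r. g (blk (Inr r))) {..<k}"
  have iT: "i \<in> tuples n k" unfolding i_def
  proof (rule tuples_restrict)
    fix r assume r: "r < k"
    then have "Inl r \<in> verts k" by simp
    then have "blk (Inl r) \<in> p" using blk by blast
    then show "g (blk (Inl r)) < n" using g kn by fastforce
  qed
  have jT: "j \<in> tuples n k" unfolding j_def
  proof (rule tuples_restrict)
    fix r assume r: "r < k"
    then have "Inr r \<in> verts k" by simp
    then have "blk (Inr r) \<in> p" using blk by blast
    then show "g (blk (Inr r)) < n" using g kn by fastforce
  qed
  have ix: "idx i j u = g (blk u)" if "u \<in> verts k" for u
    using that by (cases u) (auto simp: idx_def i_def j_def)
  have "kerv k i j = prel p"
  proof
    show "kerv k i j \<subseteq> prel p"
    proof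
      fix x assume "x \<in> kerv k i j"
      then obtain u w where x: "x = (u, w)" "u \<in> verts k" "w \<in> verts k" "idx i j u = idx i j w"
        unfolding kerv_def by blast
      then have "g (blk u) = g (blk w)" using ix by simp
      then have "blk u = blk w" using inj_onD[OF ginj _ conjunct1[OF blk[OF x(2)]] conjunct1[OF blk[OF x(3)]]] by blast
      then show "x \<in> prel p" unfolding prel_def using x blk[OF x(2)] blk[OF x(3)] by auto
    qed
    show "prel p \<subseteq> kerv k i j"
    proof
      fix x assume "x \<in> prel p"
      then obtain u w B where x: "x = (u, w)" "B \<in> p" "u \<in> B" "w \<in> B" unfolding prel_def by blast
      have uv: "u \<in> verts k" "w \<in> verts k" using diag_sub[OF p x(2)] x by auto
      have "blk u = B" by (rule diag_unique[OF p conjunct1[OF blk[OF uv(1)]] x(2) conjunct2[OF blk[OF uv(1)]] x(3)])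
      moreover have "blk w = B" by (rule diag_unique[OF p conjunct1[OF blk[OF uv(2)]] x(2) conjunct2[OF blk[OF uv(2)]] x(4)])
      ultimately show "x \<in> kerv k i j" unfolding kerv_def using x uv ix by auto
    qed
  qed
  then show ?thesis using iT jT by blast
qed

lemma par_act_ej:
  assumes i: "i \<in> tuples n k" and j: "j \<in> tuples n k"
  shows "par_act n k a (ej j) i = (\<Sum>d\<in>diagrams k. a d * diag_entry d i j)"
proof -
  have "diag_act n k d (ej j) i = diag_entry d i j" for d
  proof -
    have "diag_act n k d (ej j) i = (\<Sum>j'\<in>tuples n k. if j' = j then diag_entry d i j' else 0)"
      using i by (simp add: act_in ej_def if_distrib cong: if_cong)
    also have "\<dots> = diag_entry d i j" using j by (simp add: sum.delta')
    finally show ?thesis .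
  qed
  then show ?thesis unfolding par_act_def by simp
qed

lemma inj_aux:
  assumes kn: "k \<le> n" and a: "in_Par_bal k a"
    and z: "\<forall>i\<in>tuples n k. \<forall>j\<in>tuples n k. (\<Sum>d\<in>diagrams k. a d * diag_entry d i j) = 0"
  shows "\<forall>p. p \<in> diagrams k \<longrightarrow> balanced p \<longrightarrow> card (prel p) = m \<longrightarrow> a p = 0"
proof (induction m rule: less_induct)
  case (less m)
  show ?case
  proof (intro allI impI)
    fix p assume p: "p \<in> diagrams k" and bp: "balanced p" and m: "card (prel p) = m"
    obtain i j where i: "i \<in> tuples n k" and j: "j \<in> tuples n k" and K: "kerv k i j = prel p"
      using realize[OF p bp kn] by blast
    define S where "S = {d \<in> diagrams k. prel d \<subset> prel p}"
    have fS: "finite S" unfolding S_def by simp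
    have S0: "a d = 0" if d: "d \<in> S" for d
    proof (cases "balanced d")
      case True
      have dD: "d \<in> diagrams k" and sub: "prel d \<subset> prel p" using d unfolding S_def by auto
      have "card (prel d) < m" using psubset_card_mono[OF prel_finite[OF p] sub] m by simp
      then show ?thesis using less.IH dD True by blast
    next
      case False
      then show ?thesis using a d unfolding in_Par_bal_def S_def by blast
    qed
    have PI: "\<forall>d\<in>diagrams k. prel d = prel p \<longrightarrow> d = p" using prel_inj[OF _ p] by blast
    have set: "{d \<in> diagrams k. prel d \<subseteq> prel p} = insert p S" using p PI unfolding S_def by auto
    have "p \<notin> S" unfolding S_def by auto
    have "0 = (\<Sum>d\<in>diagrams k. a d * diag_entry d i j)" using z i j by simp
    also have "\<dots> = (\<Sum>d\<in>diagrams k. if prel d \<subseteq> prel p then a d else 0)"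
      by (rule sum.cong[OF refl]) (simp add: entry_prel K)
    also have "\<dots> = (\<Sum>d\<in>{d \<in> diagrams k. prel d \<subseteq> prel p}. a d)"
      by (rule sum.inter_filter[symmetric]) simp
    also have "\<dots> = a p + (\<Sum>d\<in>S. a d)" unfolding set using fS \<open>p \<notin> S\<close> by simp
    also have "\<dots> = a p" using S0 by simp
    finally show "a p = 0" by simp
  qed
qed

lemma inj_main:
  assumes kn: "k \<le> n" and a: "in_Par_bal k a"
    and z: "\<forall>v\<in>Tens n k. par_act n k a v = (\<lambda>_. 0)"
  shows "a = (\<lambda>_. 0)"
proof
  fix d
  have z': "\<forall>i\<in>tuples n k. \<forall>j\<in>tuples n k. (\<Sum>d\<in>diagrams k. a d * diag_entry d i j) = 0"
  proof (intro ballI)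
    fix i j assume i: "i \<in> tuples n k" and j: "j \<in> tuples n k"
    have "par_act n k a (ej j) = (\<lambda>_. 0)" using z ej_T[OF j] by blast
    then show "(\<Sum>d\<in>diagrams k. a d * diag_entry d i j) = 0" using par_act_ej[OF i j, of a] by simp
  qed
  show "a d = 0"
  proof (cases "d \<in> diagrams k \<and> balanced d")
    case True
    then show ?thesis using inj_aux[OF kn a z'] by blast
  next
    case False
    then show ?thesis using a unfolding in_Par_bal_def by blast
  qed
qed

theorem proposition4p1:
  fixes n m k :: nat
  shows
    "(\<forall>a b. in_Par_bal k a \<and> in_Par_bal k b \<longrightarrow> in_Par_bal k (par_mult n k a b))
     \<and> in_Par_bal k (par_one k)
     \<and> (\<forall>a b. in_Par_bal k a \<and> in_Par_bal k b \<longrightarrow> par_mult n k a b = par_mult m k a b)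
     \<and> (\<forall>a. in_Par_bal k a \<longrightarrow> equiv_endo n k (par_act n k a))
     \<and> (\<forall>a b. \<forall>v\<in>Tens n k. in_Par_bal k a \<and> in_Par_bal k b \<longrightarrow>
           par_act n k (par_mult n k a b) v = par_act n k a (par_act n k b v))
     \<and> (\<forall>v\<in>Tens n k. par_act n k (par_one k) v = v)
     \<and> (\<forall>f. equiv_endo n k f \<longrightarrow> (\<exists>a. in_Par_bal k a \<and> (\<forall>v\<in>Tens n k. par_act n k a v = f v)))
     \<and> (k \<le> n \<longrightarrow> (\<forall>a. in_Par_bal k a \<and> (\<forall>v\<in>Tens n k. par_act n k a v = (\<lambda>_. 0)) \<longrightarrow> a = (\<lambda>_. 0)))"
proof (intro conjI allI impI ballI)
  show "in_Par_bal k (par_mult n k a b)" if "in_Par_bal k a \<and> in_Par_bal k b" for a b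
    using mult_bal that by blast
  show "in_Par_bal k (par_one k)" by (rule one_bal)
  show "par_mult n k a b = par_mult m k a b" if "in_Par_bal k a \<and> in_Par_bal k b" for a b
    using mult_indep that by blast
  show "equiv_endo n k (par_act n k a)" if "in_Par_bal k a" for a
    using par_equiv that by blast
  show "par_act n k (par_mult n k a b) v = par_act n k a (par_act n k b v)"
    if "in_Par_bal k a \<and> in_Par_bal k b" for a b v
    using hom that by blast
  show "par_act n k (par_one k) v = v" if "v \<in> Tens n k" for v
    using one_act that by blast
  show "\<exists>a. in_Par_bal k a \<and> (\<forall>v\<in>Tens n k. par_act n k a v = f v)" if "equiv_endo n k f" for f
    using endo.surj_main[OF endo.intro[OF that]] .
  show "a = (\<lambda>_. 0)" if "k \<le> n" "in_Par_bal k a \<and> (\<forall>v\<in>Tens n k. par_act n k a v = (\<lambda>_. 0))" for a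
    using inj_main that by blast
qed


end
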